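(* Let $\varepsilon>0$ and $\boldsymbol{\mu}\in H^2(\Omega)^{n+1}$. Then the minimization problem $\min_{\boldsymbol{w}\in\mathcal{A}}F_{\boldsymbol{\mu}}(\boldsymbol{w})$ admits a unique solution $\boldsymbol{u}\in\mathcal{A}$, where $$F_{\boldsymbol{\mu}}(\boldsymbol{w})=\sum_{i=0}^n\int_\Omega\Big(w_i\ln w_i+\sum_{k=0}^nc_{ik}B_\varepsilon(w_k)w_i-\mu_iw_i\Big)\,dx.$$
   Context: $\Omega$ is the $d$-dimensional flat torus, $d\in\{2,3\}$; $n\ge1$. $\mathcal{A}=\{\boldsymbol{u}\in L^2(\Omega)^{n+1}:u_i\ge0\ \forall i,\ \sum_{i=0}^nu_i=1\text{ a.e.}\}$. $C=(c_{ij})_{i,j=0}^n$ is symmetric positive semidefinite with $c_{ii}>0$ and $(n-1)\sup_{j\ne i}|c_{ij}|\ll\min_ic_{ii}$. Kernel: $\rho\in C^\infty_c(0,\operatorname{diam}\Omega)$, $\rho\ge0$, $\int_0^\infty\rho(r)r^{d-3}dr<\infty$, $\int_0^\infty\rho(r)r^{d-1}dr=2/\int_{\mathbb{S}^{d-1}}|\sigma\cdot e_1|d\mathcal{H}^{d-1}(\sigma)$; $\rho_\varepsilon(r)=\varepsilon^{-d}\rho(r/\varepsilon)$, $K_\varepsilon(x,y)=\rho_\varepsilon(|x-y|)/|x-y|^2\in L^1(\Omega\times\Omega)$, symmetric. $B_\varepsilon(v)=(K_\varepsilon*1)v-K_\varepsilon*v$ with $(K_\varepsilon*1)(x)=\int_\Omega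 K_\varepsilon(x,y)dy$, $(K_\varepsilon*v)(x)=\int_\Omega K_\varepsilon(x,y)v(y)dy$. Convention $0\ln0=0$. *)

theory Defs
  imports "HOL-Analysis.Analysis"
begin

section \<open>The flat torus \<open>\<Omega> = \<real>^d / \<int>^d\<close>, represented by the fundamental cell [0,1)^d\<close>

definition torus_cell :: "('d::finite) itself \<Rightarrow> (real^'d) set" where
  "torus_cell _ = {x. \<forall>i. 0 \<le> x $ i \<and> x $ i < 1}"

definition torus_meas :: "('d::finite) itself \<Rightarrow> (real^'d) measure" where
  "torus_meas T = lebesgue_on (torus_cell T)"

definition tdist :: "real^'d::finite \<Rightarrow> real^'d \<Rightarrow> real" where
  "tdist x y = (INF k\<in>(UNIV :: ('d \<Rightarrow> int) set). norm (x - y - (\<chi> i. real_of_int (k i))))"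

definition torus_diam :: "('d::finite) itself \<Rightarrow> real" where
  "torus_diam _ = sqrt (real CARD('d)) / 2"

definition L2 :: "'a measure \<Rightarrow> ('a \<Rightarrow> real) \<Rightarrow> bool" where
  "L2 M f \<longleftrightarrow> f \<in> borel_measurable M \<and> integrable M (\<lambda>x. (f x)\<^sup>2)"

definition pd :: "'d::finite \<Rightarrow> (real^'d \<Rightarrow> real) \<Rightarrow> real^'d \<Rightarrow> real" where
  "pd i f x = deriv (\<lambda>t. f (x + t *\<^sub>R axis i 1)) 0"

fun pds :: "'d::finite list \<Rightarrow> (real^'d \<Rightarrow> real) \<Rightarrow> real^'d \<Rightarrow> real" where
  "pds [] f = f"
| "pds (i # is) f = pd i (pds is f)"

definition smooth_fn :: "(real^'d::finite \<Rightarrow> real) \<Rightarrow> bool" where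
  "smooth_fn f \<longleftrightarrow> (\<forall>is. continuous_on UNIV (pds is f) \<and>
      (\<forall>i x. (\<lambda>t. pds is f (x + t *\<^sub>R axis i 1)) differentiable (at 0)))"

definition periodic_fn :: "(real^'d::finite \<Rightarrow> real) \<Rightarrow> bool" where
  "periodic_fn f \<longleftrightarrow> (\<forall>x i. f (x + axis i 1) = f x)"

definition torus_test :: "(real^'d::finite \<Rightarrow> real) \<Rightarrow> bool" where
  "torus_test \<phi> \<longleftrightarrow> smooth_fn \<phi> \<and> periodic_fn \<phi>"

definition H2_torus :: "(real^'d::finite \<Rightarrow> real) \<Rightarrow> bool" where
  "H2_torus f \<longleftrightarrow> L2 (torus_meas TYPE('d)) f \<and>
     (\<forall>is::'d list. length is \<le> 2 \<longrightarrow>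
        (\<exists>g. L2 (torus_meas TYPE('d)) g \<and>
           (\<forall>\<phi>. torus_test \<phi> \<longrightarrow>
              (\<integral>x. f x * pds is \<phi> x \<partial>torus_meas TYPE('d))
              = (-1) ^ length is * (\<integral>x. g x * \<phi> x \<partial>torus_meas TYPE('d)))))"

definition adm_set :: "nat \<Rightarrow> (nat \<Rightarrow> real^'d::finite \<Rightarrow> real) set" where
  "adm_set n = {u. (\<forall>i\<le>n. L2 (torus_meas TYPE('d)) (u i)) \<and>
      (\<forall>i\<le>n. AE x in torus_meas TYPE('d). u i x \<ge> 0) \<and>
      (AE x in torus_meas TYPE('d). (\<Sum>i\<le>n. u i x) = 1)}"

definition smooth_real :: "(real \<Rightarrow> real) \<Rightarrow> bool" where
  "smooth_real f \<longleftrightarrow> (\<forall>k x. ((deriv ^^ k) f) differentiable (at x))"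

text \<open>Integral over the unit sphere S^{d-1} with respect to the surface
  (Hausdorff) measure, via the cone formula
  \<open>\<integral>_S g d\<sigma> = d \<cdot> \<integral>_{B_1} g(x/|x|) dx\<close>.\<close>
definition sphere_integral :: "('d::finite) itself \<Rightarrow> (real^'d \<Rightarrow> real) \<Rightarrow> real" where
  "sphere_integral _ g = real CARD('d) *
      (\<integral>x. indicator (ball 0 1) x * g (x /\<^sub>R norm x) \<partial>(lebesgue :: (real^'d) measure))"

text \<open>A fixed coordinate direction e_1 (any coordinate gives the same value).\<close>
definition e1 :: "real^'d::finite" where
  "e1 = axis (SOME i. True) 1"

definition kernel_ok :: "('d::finite) itself \<Rightarrow> (real \<Rightarrow> real) \<Rightarrow> bool" where
  "kernel_ok T \<rho> \<longleftrightarrow> smooth_real \<rho> \<and>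
     (\<exists>a b. 0 < a \<and> a \<le> b \<and> b < torus_diam T \<and> (\<forall>r. r \<notin> {a..b} \<longrightarrow> \<rho> r = 0)) \<and>
     (\<forall>r. \<rho> r \<ge> 0) \<and>
     set_integrable lborel {0<..} (\<lambda>r. \<rho> r * r powr (real CARD('d) - 3)) \<and>
     (LBINT r:{0<..}. \<rho> r * r ^ (CARD('d) - 1))
        = 2 / sphere_integral T (\<lambda>\<sigma>. \<bar>\<sigma> \<bullet> e1\<bar>)"

definition rho_eps :: "('d::finite) itself \<Rightarrow> (real \<Rightarrow> real) \<Rightarrow> real \<Rightarrow> real \<Rightarrow> real" where
  "rho_eps _ \<rho> \<epsilon> r = \<epsilon> powr (- real CARD('d)) * \<rho> (r / \<epsilon>)"

definition K_eps :: "(real \<Rightarrow> real) \<Rightarrow> real \<Rightarrow> real^'d::finite \<Rightarrow> real^'d \<Rightarrow> real" where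
  "K_eps \<rho> \<epsilon> x y = rho_eps TYPE('d) \<rho> \<epsilon> (tdist x y) / (tdist x y)\<^sup>2"

definition B_eps :: "(real \<Rightarrow> real) \<Rightarrow> real \<Rightarrow> (real^'d::finite \<Rightarrow> real) \<Rightarrow> real^'d \<Rightarrow> real" where
  "B_eps \<rho> \<epsilon> v x =
     (\<integral>y. K_eps \<rho> \<epsilon> x y \<partial>torus_meas TYPE('d)) * v x
     - (\<integral>y. K_eps \<rho> \<epsilon> x y * v y \<partial>torus_meas TYPE('d))"

definition ent :: "real \<Rightarrow> real" where
  "ent t = (if t = 0 then 0 else t * ln t)"

definition F_mu :: "nat \<Rightarrow> (nat \<Rightarrow> nat \<Rightarrow> real) \<Rightarrow> (real \<Rightarrow> real) \<Rightarrow> real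
    \<Rightarrow> (nat \<Rightarrow> real^'d::finite \<Rightarrow> real) \<Rightarrow> (nat \<Rightarrow> real^'d \<Rightarrow> real) \<Rightarrow> real" where
  "F_mu n c \<rho> \<epsilon> \<mu> w = (\<Sum>i\<le>n. \<integral>x. (ent (w i x)
        + (\<Sum>k\<le>n. c i k * B_eps \<rho> \<epsilon> (w k) x * w i x)
        - \<mu> i x * w i x) \<partial>torus_meas TYPE('d))"

definition coeff_ok :: "nat \<Rightarrow> (nat \<Rightarrow> nat \<Rightarrow> real) \<Rightarrow> bool" where
  "coeff_ok n c \<longleftrightarrow> (\<forall>i\<le>n. \<forall>j\<le>n. c i j = c j i) \<and>
     (\<forall>\<xi>::nat \<Rightarrow> real. (\<Sum>i\<le>n. \<Sum>j\<le>n. \<xi> i * c i j * \<xi> j) \<ge> 0) \<and>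
     (\<forall>i\<le>n. c i i > 0)"

definition offdiag_sup :: "nat \<Rightarrow> (nat \<Rightarrow> nat \<Rightarrow> real) \<Rightarrow> real" where
  "offdiag_sup n c = Max ({\<bar>c i j\<bar> | i j. i \<le> n \<and> j \<le> n \<and> i \<noteq> j} \<union> {0})"

definition diag_min :: "nat \<Rightarrow> (nat \<Rightarrow> nat \<Rightarrow> real) \<Rightarrow> real" where
  "diag_min n c = Min {c i i | i. i \<le> n}"

end

theory Submission
  imports Defs "HOL-Real_Asymp.Real_Asymp"
begin
abbreviation TM :: "(real^'d::finite) measure" where "TM \<equiv> torus_meas TYPE('d)"

lemma cell_sets: "torus_cell TYPE('d::finite) \<in> sets borel"
proof -
  have "{x\<in>space borel. \<forall>i. 0 \<le> (x::real^'d) $ i \<and> x $ i < 1} \<in> sets borel"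
    by measurable
  then show ?thesis by (simp add: torus_cell_def)
qed

lemma cell_lmeas: "torus_cell TYPE('d::finite) \<in> lmeasurable"
proof (rule bounded_set_imp_lmeasurable)
  have "torus_cell TYPE('d) \<subseteq> cbox 0 1"
    by (auto simp: torus_cell_def mem_box_cart less_imp_le)
  then show "bounded (torus_cell TYPE('d))" by (meson bounded_cbox bounded_subset)
  show "torus_cell TYPE('d) \<in> sets lebesgue" by (rule sets_completionI_sets) (simp add: cell_sets)
qed

lemma TM_finite: "finite_measure (TM::(real^'d::finite) measure)"
  unfolding torus_meas_def by (rule finite_measure_lebesgue_on[OF cell_lmeas])

interpretation TMf: finite_measure "TM::(real^'d::finite) measure" by (rule TM_finite)
interpretation TMp: pair_sigma_finite "TM::(real^'d::finite) measure" "TM::(real^'d::finite) measure" 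
  by (simp add: TMf.sigma_finite_measure_axioms pair_sigma_finite_def)

lemma id_TM_borel: "(\<lambda>x. x) \<in> measurable (TM::(real^'d::finite) measure) borel"
  using id_borel_measurable_lebesgue_on unfolding torus_meas_def id_def by blast

lemma borel_TM: "f \<in> borel_measurable borel \<Longrightarrow> f \<in> borel_measurable (TM::(real^'d::finite) measure)"
  using measurable_compose[OF id_TM_borel] by blast

lemma borel_TM2:
  assumes "(\<lambda>p. f (fst p) (snd p)) \<in> borel_measurable (borel :: ((real^'d::finite) \<times> (real^'d)) measure)"
  shows "(\<lambda>(x,y). f x y) \<in> borel_measurable ((TM::(real^'d) measure) \<Otimes>\<^sub>M TM)"
proof -
  have "(\<lambda>p. p) \<in> measurable ((TM::(real^'d) measure) \<Otimes>\<^sub>M TM) (borel \<Otimes>\<^sub>M borel)"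
    by (intro measurable_pair measurable_compose[OF _ id_TM_borel]) auto
  then have "(\<lambda>p. p) \<in> measurable ((TM::(real^'d) measure) \<Otimes>\<^sub>M TM) borel"
    by (simp add: borel_prod)
  from measurable_compose[OF this assms] show ?thesis by (simp add: case_prod_beta')
qed

definition tf :: "real^'d::finite \<Rightarrow> real" where
  "tf z = (INF k\<in>(UNIV :: ('d \<Rightarrow> int) set). norm (z - (\<chi> i. real_of_int (k i))))"

lemma tdist_tf: "tdist x y = tf (x - y)"
  by (simp add: tdist_def tf_def)

lemma tf_bdd: "bdd_below ((\<lambda>k. norm (z - (\<chi> i. real_of_int (k i)))) ` UNIV)"
  by (rule bdd_belowI[where m=0]) auto

lemma tf_nonneg: "0 \<le> tf z"
  unfolding tf_def by (rule cINF_greatest) auto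

lemma tf_lower: "tf z \<le> norm (z - (\<chi> i. real_of_int (k i)))"
  unfolding tf_def by (rule cINF_lower[OF tf_bdd]) simp

lemma tf_le: "tf (z::real^'d::finite) \<le> tf w + norm (z - w)"
proof -
  have "tf z - norm (z - w) \<le> tf w"
    unfolding tf_def[of w]
  proof (rule cINF_greatest)
    fix k :: "'d::finite \<Rightarrow> int"
    have "tf z \<le> norm (z - (\<chi> i. real_of_int (k i)))" by (rule tf_lower)
    also have "\<dots> \<le> norm (w - (\<chi> i. real_of_int (k i))) + norm (z - w)"
      by (metis add.commute diff_add_cancel norm_triangle_ineq add_diff_eq)
    finally show "tf z - norm (z - w) \<le> norm (w - (\<chi> i. real_of_int (k i)))" by simp
  qed auto
  then show ?thesis by simp
qed

lemma tf_lip: "1-lipschitz_on UNIV tf"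
proof (rule lipschitz_onI)
  fix x y :: "real^'d"
  have "tf x \<le> tf y + norm (x - y)" "tf y \<le> tf x + norm (y - x)" by (rule tf_le)+
  then show "dist (tf x) (tf y) \<le> 1 * dist x y"
    by (simp add: dist_norm norm_minus_commute abs_le_iff)
qed simp

lemma tf_cont: "continuous_on UNIV tf"
  by (rule lipschitz_on_continuous_on[OF tf_lip])

lemma tf_meas[measurable]: "tf \<in> borel_measurable borel"
  by (rule borel_measurable_continuous_onI[OF tf_cont])

lemma tf_uminus_le: "tf (- (z::real^'d::finite)) \<le> tf z"
  unfolding tf_def[of z]
proof (rule cINF_greatest)
  fix k :: "'d::finite \<Rightarrow> int"
  have "tf (-z) \<le> norm (- z - (\<chi> i. real_of_int ((\<lambda>i. - k i) i)))" by (rule tf_lower)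
  also have "\<dots> = norm (z - (\<chi> i. real_of_int (k i)))"
  proof -
    have "- z - (\<chi> i. real_of_int ((\<lambda>i. - k i) i)) = - (z - (\<chi> i. real_of_int (k i)))"
      by (simp add: vec_eq_iff)
    then show ?thesis by (simp only: norm_minus_cancel)
  qed
  finally show "tf (-z) \<le> norm (z - (\<chi> i. real_of_int (k i)))" .
qed auto

lemma tf_uminus: "tf (- z) = tf z"
  using tf_uminus_le[of z] tf_uminus_le[of "-z"] by simp

lemma tdist_sym: "tdist x y = tdist y x"
  by (metis tdist_tf tf_uminus minus_diff_eq)

abbreviation vol :: "('d::finite) itself \<Rightarrow> real" where
  "vol T \<equiv> measure (torus_meas T) (space (torus_meas T))"

definition bnd :: "(real^'d::finite \<Rightarrow> real) \<Rightarrow> bool" where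
  "bnd v \<longleftrightarrow> v \<in> borel_measurable TM \<and> (\<exists>C. AE x in TM. \<bar>v x\<bar> \<le> C)"

lemma bndD: "bnd v \<Longrightarrow> v \<in> borel_measurable TM" by (simp add: bnd_def)

lemma bnd_const[simp]: "bnd (\<lambda>x. c)"
  unfolding bnd_def by (auto intro!: exI[of _ "\<bar>c\<bar>"])

lemma bnd_add: "bnd a \<Longrightarrow> bnd b \<Longrightarrow> bnd (\<lambda>x. a x + b x)"
  unfolding bnd_def
proof (elim conjE exE, intro conjI)
  fix Ca Cb assume "AE x in TM. \<bar>a x\<bar> \<le> Ca" "AE x in TM. \<bar>b x\<bar> \<le> Cb"
  then show "\<exists>C. AE x in TM. \<bar>a x + b x\<bar> \<le> C"
  proof (intro exI[of _ "Ca + Cb"])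
    show "AE x in TM. \<bar>a x + b x\<bar> \<le> Ca + Cb"
      using \<open>AE x in TM. \<bar>a x\<bar> \<le> Ca\<close> \<open>AE x in TM. \<bar>b x\<bar> \<le> Cb\<close>
      by eventually_elim (auto intro: order_trans[OF abs_triangle_ineq] add_mono)
  qed
qed auto

lemma bnd_mult: "bnd a \<Longrightarrow> bnd b \<Longrightarrow> bnd (\<lambda>x. a x * b x)"
  unfolding bnd_def
proof (elim conjE exE, intro conjI)
  fix Ca Cb assume "AE x in TM. \<bar>a x\<bar> \<le> Ca" "AE x in TM. \<bar>b x\<bar> \<le> Cb"
  then show "\<exists>C. AE x in TM. \<bar>a x * b x\<bar> \<le> C"
  proof (intro exI[of _ "Ca * Cb"])
    show "AE x in TM. \<bar>a x * b x\<bar> \<le> Ca * Cb"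
      using \<open>AE x in TM. \<bar>a x\<bar> \<le> Ca\<close> \<open>AE x in TM. \<bar>b x\<bar> \<le> Cb\<close>
    proof eventually_elim
      case (elim x)
      then have "0 \<le> Ca" by linarith
      then show ?case using elim by (simp add: abs_mult mult_mono)
    qed
  qed
qed auto

lemma bnd_minus: "bnd a \<Longrightarrow> bnd (\<lambda>x. - a x)"
  unfolding bnd_def by auto

lemma bnd_diff: assumes "bnd a" "bnd b" shows "bnd (\<lambda>x. a x - b x)"
proof -
  have "bnd (\<lambda>x. a x + - b x)" by (rule bnd_add[OF assms(1) bnd_minus[OF assms(2)]])
  then show ?thesis by simp
qed

lemma bnd_sum: "(\<And>i. i \<in> I \<Longrightarrow> bnd (f i)) \<Longrightarrow> bnd (\<lambda>x. \<Sum>i\<in>I. f i x)"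
proof (induction I rule: infinite_finite_induct)
  case (insert i I) then show ?case by (simp add: bnd_add)
qed simp_all

lemma bnd_integrable: assumes "bnd v" shows "integrable TM v"
proof -
  obtain C where C: "AE x in TM. \<bar>v x\<bar> \<le> C" and m: "v \<in> borel_measurable TM"
    using assms unfolding bnd_def by blast
  show ?thesis by (rule TMf.integrable_const_bound[where B=C]) (use C m in auto)
qed

lemma int_bound:
  fixes f :: "real^'d::finite \<Rightarrow> real"
  assumes "integrable TM f" "AE x in TM. \<bar>f x\<bar> \<le> B"
  shows "\<bar>integral\<^sup>L TM f\<bar> \<le> B * vol TYPE('d)"
proof -
  have "\<bar>integral\<^sup>L TM f\<bar> \<le> (\<integral>x. \<bar>f x\<bar> \<partial>TM)" by (rule integral_abs_bound)
  also have "\<dots> \<le> (\<integral>x. B \<partial>(TM::(real^'d) measure))"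
    using assms by (intro Bochner_Integration.integral_mono_AE integrable_abs TMf.integrable_const) auto
  finally show ?thesis by (simp add: mult.commute)
qed

definition Kok :: "(real^'d::finite \<Rightarrow> real^'d \<Rightarrow> real) \<Rightarrow> real \<Rightarrow> bool" where
  "Kok K Kc \<longleftrightarrow> (\<lambda>p. K (fst p) (snd p)) \<in> borel_measurable borel \<and>
     (\<forall>x y. 0 \<le> K x y \<and> K x y \<le> Kc) \<and> (\<forall>x y. K x y = K y x)"

definition Bk :: "(real^'d::finite \<Rightarrow> real^'d \<Rightarrow> real) \<Rightarrow> (real^'d \<Rightarrow> real) \<Rightarrow> real^'d \<Rightarrow> real" where
  "Bk K v x = (\<integral>y. K x y \<partial>TM) * v x - (\<integral>y. K x y * v y \<partial>TM)"

lemma Kok_meas2: "Kok K Kc \<Longrightarrow> (\<lambda>(x,y). K x y) \<in> borel_measurable (TM \<Otimes>\<^sub>M TM)"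
  unfolding Kok_def by (intro borel_TM2) auto

lemma Kok_meas1: assumes "Kok K Kc" shows "(\<lambda>y. K x y) \<in> borel_measurable TM"
proof -
  have p: "(\<lambda>y. (x,y)) \<in> measurable borel borel"
    by (simp add: borel_measurable_continuous_onI continuous_intros)
  have m: "(\<lambda>p. K (fst p) (snd p)) \<in> borel_measurable borel"
    using assms unfolding Kok_def by blast
  have "(\<lambda>y. (\<lambda>p. K (fst p) (snd p)) (x,y)) \<in> borel_measurable borel"
    by (rule measurable_compose[OF p m])
  then have "(\<lambda>y. K x y) \<in> borel_measurable borel" by simp
  then show ?thesis by (rule borel_TM)
qed

lemma Kok_bnd1: "Kok K Kc \<Longrightarrow> bnd (\<lambda>y. K x y)"
proof -
  assume K: "Kok K Kc"
  then have "\<forall>y. \<bar>K x y\<bar> \<le> Kc" unfolding Kok_def by auto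
  then show ?thesis unfolding bnd_def using Kok_meas1[OF K, of x]
    by (intro conjI exI[of _ Kc]) auto
qed

lemma Kok_int1: "Kok K Kc \<Longrightarrow> bnd v \<Longrightarrow> integrable TM (\<lambda>y. K x y * v y)"
  by (rule bnd_integrable, rule bnd_mult[OF Kok_bnd1])

lemma Bk_meas: assumes K: "Kok K Kc" and v: "bnd v" shows "Bk K v \<in> borel_measurable TM"
proof -
  have m1: "(\<lambda>(x,y). K x y) \<in> borel_measurable (TM \<Otimes>\<^sub>M TM)" by (rule Kok_meas2[OF K])
  have "(\<lambda>p. v (snd p)) \<in> borel_measurable (TM \<Otimes>\<^sub>M TM)"
    using bndD[OF v] by (rule measurable_compose[OF measurable_snd])
  with m1 have m2: "(\<lambda>(x,y). K x y * v y) \<in> borel_measurable (TM \<Otimes>\<^sub>M TM)"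
    unfolding case_prod_beta' by (rule borel_measurable_times)
  have "(\<lambda>x. \<integral>y. K x y \<partial>TM) \<in> borel_measurable TM"
    by (rule TMf.borel_measurable_lebesgue_integral[OF m1])
  moreover have "(\<lambda>x. \<integral>y. K x y * v y \<partial>TM) \<in> borel_measurable TM"
    by (rule TMf.borel_measurable_lebesgue_integral[OF m2])
  ultimately show ?thesis unfolding Bk_def[abs_def]
    using bndD[OF v] by (intro borel_measurable_diff borel_measurable_times) auto
qed

lemma AE_pair2:
  assumes "AE x in TM. P x" "AE y in TM. Q y"
  shows "AE x in (TM::(real^'d::finite) measure). AE y in (TM::(real^'d) measure). P x \<and> Q y"
  using assms(1)
proof eventually_elim
  case (elim x)
  show ?case using assms(2) by eventually_elim (simp add: elim)
qed

lemma prod_int: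
  fixes g :: "(real^'d::finite) \<times> (real^'d) \<Rightarrow> real"
  assumes m[measurable]: "g \<in> borel_measurable ((TM::(real^'d::finite) measure) \<Otimes>\<^sub>M TM)"
    and b: "AE x in (TM::(real^'d) measure). AE y in (TM::(real^'d) measure). \<bar>g (x,y)\<bar> \<le> B"
  shows "integrable ((TM::(real^'d) measure) \<Otimes>\<^sub>M TM) g"
proof -
  interpret P: finite_measure "(TM::(real^'d) measure) \<Otimes>\<^sub>M TM"
    by (rule finite_measure_pair_measure[OF TM_finite TM_finite])
  have "{p \<in> space ((TM::(real^'d) measure) \<Otimes>\<^sub>M TM). \<bar>g p\<bar> \<le> B} = (\<lambda>p. \<bar>g p\<bar>) -` {..B} \<inter> space ((TM::(real^'d) measure) \<Otimes>\<^sub>M TM)"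
    by auto
  also have "\<dots> \<in> sets ((TM::(real^'d) measure) \<Otimes>\<^sub>M TM)"
    by (rule measurable_sets[OF borel_measurable_abs[OF m]]) simp
  finally have "{p \<in> space ((TM::(real^'d) measure) \<Otimes>\<^sub>M TM). \<bar>g p\<bar> \<le> B} \<in> sets ((TM::(real^'d) measure) \<Otimes>\<^sub>M TM)" .
  from TMp.AE_pair_measure[OF this] b
  have "AE p in (TM::(real^'d) measure) \<Otimes>\<^sub>M TM. \<bar>g p\<bar> \<le> B" by simp
  then show ?thesis by (intro P.integrable_const_bound[where B=B] m) simp
qed

lemma abs_mult_le: "\<bar>u\<bar> \<le> U \<Longrightarrow> \<bar>v\<bar> \<le> V \<Longrightarrow> \<bar>u * v\<bar> \<le> U * (V::real)"
  by (simp add: abs_mult mult_mono')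

lemma Kok_nonneg: "Kok K Kc \<Longrightarrow> 0 \<le> K x y" unfolding Kok_def by blast
lemma Kok_le: "Kok K Kc \<Longrightarrow> K x y \<le> Kc" unfolding Kok_def by blast
lemma Kok_sym: "Kok K Kc \<Longrightarrow> K x y = K y x" unfolding Kok_def by blast

lemma Kok_prod_int:
  assumes K: "Kok K Kc" and a: "bnd a" "bnd a'" and b: "bnd b" "bnd b'"
  shows "integrable ((TM::(real^'d::finite) measure) \<Otimes>\<^sub>M TM) (\<lambda>(x,y). K x y * (a x - a' y) * (b x - b' y))"
proof -
  obtain Ca Ca' Cb Cb' where
    h: "AE x in TM. \<bar>a x\<bar> \<le> Ca" "AE x in TM. \<bar>a' x\<bar> \<le> Ca'"
       "AE x in TM. \<bar>b x\<bar> \<le> Cb" "AE x in TM. \<bar>b' x\<bar> \<le> Cb'"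
    using a b unfolding bnd_def by metis
  have mK: "(\<lambda>p. K (fst p) (snd p)) \<in> borel_measurable ((TM::(real^'d) measure) \<Otimes>\<^sub>M TM)"
    using Kok_meas2[OF K] by (simp add: case_prod_beta')
  have ma: "(\<lambda>p. a (fst p)) \<in> borel_measurable ((TM::(real^'d) measure) \<Otimes>\<^sub>M TM)"
    "(\<lambda>p. a' (snd p)) \<in> borel_measurable ((TM::(real^'d) measure) \<Otimes>\<^sub>M TM)"
    "(\<lambda>p. b (fst p)) \<in> borel_measurable ((TM::(real^'d) measure) \<Otimes>\<^sub>M TM)"
    "(\<lambda>p. b' (snd p)) \<in> borel_measurable ((TM::(real^'d) measure) \<Otimes>\<^sub>M TM)"
    using a b by (auto intro: measurable_compose[OF measurable_fst] measurable_compose[OF measurable_snd] dest: bndD)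
  have m: "(\<lambda>(x,y). K x y * (a x - a' y) * (b x - b' y)) \<in> borel_measurable ((TM::(real^'d) measure) \<Otimes>\<^sub>M TM)"
    unfolding case_prod_beta'
    by (intro borel_measurable_times borel_measurable_diff mK ma)
  have "AE x in (TM::(real^'d) measure). AE y in (TM::(real^'d) measure).
          (\<bar>a x\<bar> \<le> Ca \<and> \<bar>b x\<bar> \<le> Cb) \<and> (\<bar>a' y\<bar> \<le> Ca' \<and> \<bar>b' y\<bar> \<le> Cb')"
    by (rule AE_pair2) (use h in auto)
  then have "AE x in (TM::(real^'d) measure). AE y in (TM::(real^'d) measure).
     \<bar>K x y * (a x - a' y) * (b x - b' y)\<bar> \<le> Kc * (Ca + Ca') * (Cb + Cb')"
  proof (rule eventually_mono)
    fix x assume "AE y in (TM::(real^'d) measure). (\<bar>a x\<bar> \<le> Ca \<and> \<bar>b x\<bar> \<le> Cb) \<and> (\<bar>a' y\<bar> \<le> Ca' \<and> \<bar>b' y\<bar> \<le> Cb')"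
    then show "AE y in (TM::(real^'d) measure). \<bar>K x y * (a x - a' y) * (b x - b' y)\<bar> \<le> Kc * (Ca + Ca') * (Cb + Cb')"
    proof (rule eventually_mono)
      fix y assume hx: "(\<bar>a x\<bar> \<le> Ca \<and> \<bar>b x\<bar> \<le> Cb) \<and> (\<bar>a' y\<bar> \<le> Ca' \<and> \<bar>b' y\<bar> \<le> Cb')"
      have "\<bar>K x y\<bar> \<le> Kc" using Kok_nonneg[OF K, of x y] Kok_le[OF K, of x y] by simp
      moreover have "\<bar>a x - a' y\<bar> \<le> Ca + Ca'" using hx by linarith
      moreover have "\<bar>b x - b' y\<bar> \<le> Cb + Cb'" using hx by linarith
      ultimately show "\<bar>K x y * (a x - a' y) * (b x - b' y)\<bar> \<le> Kc * (Ca + Ca') * (Cb + Cb')"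
        by (intro abs_mult_le)
    qed
  qed
  then show ?thesis by (intro prod_int[OF m]) simp
qed

lemma Kok_inner_int:
  assumes K: "Kok K Kc" and h: "bnd h" shows "integrable TM (\<lambda>y. K x y * h y)"
  by (rule Kok_int1[OF K h])

lemma Bk_bilin:
  assumes K: "Kok K Kc" and a: "bnd a" and b: "bnd b"
  shows "(\<integral>x. Bk K a x * b x \<partial>TM) =
         (\<integral>x. (\<integral>y. K x y * (a x - a y) * (b x - b y) \<partial>TM) \<partial>(TM::(real^'d::finite) measure)) / 2"
proof -
  define f1 where "f1 x y = K x y * (a x - a y) * b x" for x y
  define f2 where "f2 x y = K x y * (a x - a y) * b y" for x y
  have i1: "integrable ((TM::(real^'d) measure) \<Otimes>\<^sub>M TM) (\<lambda>(x,y). f1 x y)"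
    using Kok_prod_int[OF K a a b bnd_const[of 0]] unfolding f1_def by simp
  have i2: "integrable ((TM::(real^'d) measure) \<Otimes>\<^sub>M TM) (\<lambda>(x,y). f2 x y)"
    using Kok_prod_int[OF K a a bnd_const[of 0] bnd_minus[OF b]] unfolding f2_def by simp
  have ii1: "integrable TM (\<lambda>y. f1 x y)" for x
  proof -
    have "integrable TM (\<lambda>y. K x y * ((a x - a y) * b x))"
      by (intro Kok_int1[OF K] bnd_mult bnd_diff a) simp_all
    then show ?thesis unfolding f1_def by (simp add: mult.assoc)
  qed
  have ii2: "integrable TM (\<lambda>y. f2 x y)" for x
  proof -
    have "integrable TM (\<lambda>y. K x y * ((a x - a y) * b y))"
      by (intro Kok_int1[OF K] bnd_mult bnd_diff a b) simp_all
    then show ?thesis unfolding f2_def by (simp add: mult.assoc)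
  qed
  have step1: "Bk K a x * b x = (\<integral>y. f1 x y \<partial>TM)" for x
  proof -
    have iK: "integrable TM (\<lambda>y. K x y)" by (rule bnd_integrable[OF Kok_bnd1[OF K]])
    have iKa: "integrable TM (\<lambda>y. K x y * a y)" by (rule Kok_int1[OF K a])
    have iKc: "integrable TM (\<lambda>y. K x y * a x)" by (rule Kok_int1[OF K bnd_const])
    have "(\<integral>y. f1 x y \<partial>TM) = (\<integral>y. (K x y * a x - K x y * a y) * b x \<partial>TM)"
      unfolding f1_def by (simp add: algebra_simps)
    also have "\<dots> = (\<integral>y. K x y * a x - K x y * a y \<partial>TM) * b x"
      by (rule integral_mult_left_zero)
    also have "\<dots> = ((\<integral>y. K x y * a x \<partial>TM) - (\<integral>y. K x y * a y \<partial>TM)) * b x"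
      by (subst Bochner_Integration.integral_diff[OF iKc iKa]) (rule refl)
    also have "\<dots> = Bk K a x * b x"
      unfolding Bk_def by simp
    finally show ?thesis by simp
  qed
  have I1: "(\<integral>x. Bk K a x * b x \<partial>TM) = (\<integral>x. (\<integral>y. f1 x y \<partial>TM) \<partial>(TM::(real^'d) measure))"
    using step1 by simp
  have "(\<integral>x. (\<integral>y. f1 x y \<partial>TM) \<partial>(TM::(real^'d) measure)) = (\<integral>y. (\<integral>x. f1 x y \<partial>TM) \<partial>(TM::(real^'d) measure))"
    by (rule TMp.Fubini_integral[OF i1, symmetric])
  also have "\<dots> = (\<integral>y. (\<integral>x. - f2 y x \<partial>TM) \<partial>(TM::(real^'d) measure))"
    unfolding f1_def f2_def
  proof (rule Bochner_Integration.integral_cong[OF refl], rule Bochner_Integration.integral_cong[OF refl])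
    fix y x show "K x y * (a x - a y) * b x = - (K y x * (a y - a x) * b x)"
      using Kok_sym[OF K, of x y] by (simp add: algebra_simps)
  qed
  also have "\<dots> = - (\<integral>y. (\<integral>x. f2 y x \<partial>TM) \<partial>(TM::(real^'d) measure))"
    by simp
  finally have sw: "(\<integral>x. (\<integral>y. f1 x y \<partial>TM) \<partial>(TM::(real^'d) measure)) = - (\<integral>x. (\<integral>y. f2 x y \<partial>TM) \<partial>(TM::(real^'d) measure))" .
  have "(\<integral>x. (\<integral>y. K x y * (a x - a y) * (b x - b y) \<partial>TM) \<partial>(TM::(real^'d) measure))
      = (\<integral>x. (\<integral>y. f1 x y \<partial>TM) - (\<integral>y. f2 x y \<partial>TM) \<partial>(TM::(real^'d) measure))"
  proof (rule Bochner_Integration.integral_cong[OF refl])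
    fix x
    have "(\<integral>y. K x y * (a x - a y) * (b x - b y) \<partial>TM) = (\<integral>y. f1 x y - f2 x y \<partial>TM)"
      unfolding f1_def f2_def by (simp add: algebra_simps)
    also have "\<dots> = (\<integral>y. f1 x y \<partial>TM) - (\<integral>y. f2 x y \<partial>TM)"
      by (rule Bochner_Integration.integral_diff[OF ii1 ii2])
    finally show "(\<integral>y. K x y * (a x - a y) * (b x - b y) \<partial>TM) = (\<integral>y. f1 x y \<partial>TM) - (\<integral>y. f2 x y \<partial>TM)" .
  qed
  also have "\<dots> = (\<integral>x. (\<integral>y. f1 x y \<partial>TM) \<partial>(TM::(real^'d) measure)) - (\<integral>x. (\<integral>y. f2 x y \<partial>TM) \<partial>(TM::(real^'d) measure))"
    by (rule Bochner_Integration.integral_diff[OF TMp.integrable_fst[OF i1] TMp.integrable_fst[OF i2]])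
  finally show ?thesis using I1 sw by simp
qed


lemma Q_nonneg:
  assumes K: "Kok K Kc" and c: "\<forall>\<xi>::nat \<Rightarrow> real. (\<Sum>i\<le>n. \<Sum>j\<le>n. \<xi> i * c i j * \<xi> j) \<ge> 0"
    and d: "\<And>i. i \<le> n \<Longrightarrow> bnd (d i)"
  shows "0 \<le> (\<Sum>i\<le>n. \<Sum>k\<le>n. c i k * (\<integral>x. Bk K (d k) x * d i x \<partial>(TM::(real^'d::finite) measure)))"
proof -
  define g where "g i k x y = K x y * (d k x - d k y) * (d i x - d i y)" for i k x y
  have gp: "integrable ((TM::(real^'d) measure) \<Otimes>\<^sub>M TM) (\<lambda>(x,y). g i k x y)" if "i \<le> n" "k \<le> n" for i k
    unfolding g_def by (rule Kok_prod_int[OF K d d d d]) (use that in auto)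
  have gi: "integrable TM (\<lambda>y. g i k x y)" if "i \<le> n" "k \<le> n" for i k x
  proof -
    have "integrable TM (\<lambda>y. K x y * ((d k x - d k y) * (d i x - d i y)))"
      using that by (intro Kok_int1[OF K] bnd_mult bnd_diff d bnd_const) auto
    then show ?thesis unfolding g_def by (simp add: mult.assoc)
  qed
  have "(\<Sum>i\<le>n. \<Sum>k\<le>n. c i k * (\<integral>x. Bk K (d k) x * d i x \<partial>(TM::(real^'d) measure)))
      = (\<Sum>i\<le>n. \<Sum>k\<le>n. c i k * ((\<integral>x. (\<integral>y. g i k x y \<partial>TM) \<partial>(TM::(real^'d) measure)) / 2))"
    unfolding g_def by (intro sum.cong refl) (simp add: Bk_bilin[OF K d d])
  also have "\<dots> = (\<integral>x. (\<Sum>i\<le>n. \<Sum>k\<le>n. c i k * (\<integral>y. g i k x y \<partial>TM)) \<partial>(TM::(real^'d) measure)) / 2"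
  proof -
    have "(\<integral>x. (\<Sum>i\<le>n. \<Sum>k\<le>n. c i k * (\<integral>y. g i k x y \<partial>TM)) \<partial>(TM::(real^'d) measure))
        = (\<Sum>i\<le>n. \<integral>x. (\<Sum>k\<le>n. c i k * (\<integral>y. g i k x y \<partial>TM)) \<partial>(TM::(real^'d) measure))"
      by (rule Bochner_Integration.integral_sum)
         (auto intro!: Bochner_Integration.integrable_sum integrable_mult_right TMp.integrable_fst gp)
    also have "\<dots> = (\<Sum>i\<le>n. \<Sum>k\<le>n. c i k * (\<integral>x. (\<integral>y. g i k x y \<partial>TM) \<partial>(TM::(real^'d) measure)))"
      by (intro sum.cong refl, subst Bochner_Integration.integral_sum)
         (auto intro!: integrable_mult_right TMp.integrable_fst gp)
    finally show ?thesis by (simp add: sum_divide_distrib)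
  qed
  also have "\<dots> = (\<integral>x. (\<integral>y. (\<Sum>i\<le>n. \<Sum>k\<le>n. c i k * g i k x y) \<partial>TM) \<partial>(TM::(real^'d) measure)) / 2"
  proof -
    have "(\<Sum>i\<le>n. \<Sum>k\<le>n. c i k * (\<integral>y. g i k x y \<partial>TM)) = (\<integral>y. (\<Sum>i\<le>n. \<Sum>k\<le>n. c i k * g i k x y) \<partial>TM)" for x
    proof -
      have "(\<integral>y. (\<Sum>i\<le>n. \<Sum>k\<le>n. c i k * g i k x y) \<partial>TM) = (\<Sum>i\<le>n. (\<integral>y. (\<Sum>k\<le>n. c i k * g i k x y) \<partial>(TM::(real^'d) measure)))"
        by (subst Bochner_Integration.integral_sum)
           (auto intro!: Bochner_Integration.integrable_sum integrable_mult_right gi)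
      also have "\<dots> = (\<Sum>i\<le>n. \<Sum>k\<le>n. c i k * (\<integral>y. g i k x y \<partial>TM))"
        by (intro sum.cong refl, subst Bochner_Integration.integral_sum)
           (auto intro!: integrable_mult_right gi)
      finally show ?thesis by simp
    qed
    then show ?thesis by simp
  qed
  also have "\<dots> \<ge> 0"
  proof -
    have "0 \<le> (\<Sum>i\<le>n. \<Sum>k\<le>n. c i k * g i k x y)" for x y
    proof -
      have "(\<Sum>i\<le>n. \<Sum>k\<le>n. c i k * g i k x y)
          = K x y * (\<Sum>i\<le>n. \<Sum>j\<le>n. (d i x - d i y) * c i j * (d j x - d j y))"
        unfolding g_def by (simp add: sum_distrib_left mult_ac)
      also have "\<dots> \<ge> 0"
        using c[rule_format, of "\<lambda>i. d i x - d i y"] Kok_nonneg[OF K, of x y] by simp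
      finally show ?thesis .
    qed
    then show ?thesis by (simp add: Bochner_Integration.integral_nonneg)
  qed
  finally show ?thesis .
qed

lemma ent_meas[measurable]: "ent \<in> borel_measurable borel"
  unfolding ent_def[abs_def] by measurable

lemma ln_ge_1_minus: "0 < z \<Longrightarrow> 1 - 1 / z \<le> ln (z::real)"
  using ln_le_minus_one[of "1/z"] by (simp add: ln_div)

lemma ent_bound: assumes "0 \<le> t" "t \<le> 1" shows "\<bar>ent t\<bar> \<le> 1"
proof (cases "t = 0")
  case False
  then have t: "0 < t" using assms by simp
  have "ln t \<le> 0" using assms t by simp
  then have u: "t * ln t \<le> 0" using t by (simp add: mult_nonneg_nonpos)
  have "t * (1 - 1/t) \<le> t * ln t" using ln_ge_1_minus[OF t] t by (simp add: mult_left_mono)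
  then have "t - 1 \<le> t * ln t" using t by (simp add: algebra_simps)
  then show ?thesis using u assms False by (simp add: ent_def abs_le_iff)
qed (simp add: ent_def)

lemma ent_cont: "continuous_on {0..} ent"
proof -
  have "continuous (at t within {0..}) ent" if t: "0 \<le> t" for t
  proof (cases "t = 0")
    case True
    have "((\<lambda>x::real. x * ln x) \<longlongrightarrow> 0) (at_right 0)" by real_asymp
    then have "(ent \<longlongrightarrow> 0) (at_right 0)"
      by (rule Lim_transform_eventually) (auto simp: ent_def eventually_at_right_less)
    then have "(ent \<longlongrightarrow> ent 0) (at 0 within {0<..})" by (simp add: ent_def)
    then have "(ent \<longlongrightarrow> ent 0) (at 0 within {0..})"
    proof -
      have "{0..} - {0} = {(0::real)<..}" by auto
      then show ?thesis using \<open>(ent \<longlongrightarrow> ent 0) (at 0 within {0<..})\<close> by (simp add: at_within_def)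
    qed
    then show ?thesis using True by (simp add: continuous_within)
  next
    case False
    then have tp: "0 < t" using t by simp
    have "isCont (\<lambda>x. x * ln x) t" using tp by (intro continuous_intros) auto
    moreover have "\<forall>\<^sub>F x in nhds t. x * ln x = ent x"
      using eventually_nhds_in_open[of "{0<..}" t] tp
      by (auto simp: ent_def elim!: eventually_mono)
    ultimately have "isCont ent t"
      using isCont_cong by (metis ent_def less_irrefl tp)
    then show ?thesis by (rule continuous_at_imp_continuous_within)
  qed
  then show ?thesis by (simp add: continuous_on_eq_continuous_within)
qed


lemma entg_convex: "convex_on {0<..1} (\<lambda>t::real. t * ln t - t^2 / 2)"
proof (rule convex_on_realI[where f' = "\<lambda>t. ln t + 1 - t"])
  show "connected {0<..(1::real)}" by simp
  fix x :: real assume "x \<in> {0<..1}"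
  then show "((\<lambda>t::real. t * ln t - t^2 / 2) has_real_derivative ln x + 1 - x) (at x)"
    by (auto intro!: derivative_eq_intros)
next
  fix x y :: real assume xy: "x \<in> {0<..1}" "y \<in> {0<..1}" "x \<le> y"
  have "1 - x / y \<le> ln (y / x)" using ln_ge_1_minus[of "y/x"] xy by simp
  moreover have "y - x \<le> 1 - x / y"
  proof -
    have "(y - x) * y \<le> (y - x)" using xy by (simp add: mult_left_le)
    then show ?thesis using xy by (simp add: field_simps)
  qed
  ultimately have "y - x \<le> ln y - ln x" using xy by (simp add: ln_div)
  then show "ln x + 1 - x \<le> ln y + 1 - y" by simp
qed

lemma ln2_ge: "1/2 \<le> ln (2::real)"
  using ln_ge_1_minus[of 2] by simp

lemma ent_gap0: assumes "0 \<le> t" "t \<le> 1"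
  shows "(0 - t)^2 / 4 \<le> ent 0 + ent t - 2 * ent ((0 + t) / 2)"
proof (cases "t = 0")
  case False
  then have t: "0 < t" using assms by simp
  have "ent t - 2 * ent (t/2) = t * ln 2" using t by (simp add: ent_def ln_div algebra_simps)
  moreover have "t^2/4 \<le> t * ln 2"
  proof -
    have "t^2/4 \<le> t * (1/2)" using assms t by (simp add: power2_eq_square field_simps mult_left_le)
    also have "\<dots> \<le> t * ln 2" using ln2_ge t by (intro mult_left_mono) auto
    finally show ?thesis .
  qed
  ultimately show ?thesis by (simp add: ent_def)
qed (simp add: ent_def)

lemma ent_gap: assumes "0 \<le> s" "s \<le> 1" "0 \<le> t" "t \<le> 1"
  shows "(s - t)^2 / 4 \<le> ent s + ent t - 2 * ent ((s + t) / 2)"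
proof -
  consider "s = 0" | "t = 0" | "0 < s \<and> 0 < t" using assms by linarith
  then show ?thesis
  proof cases
    case 1 then show ?thesis using ent_gap0[OF assms(3,4)] by simp
  next
    case 2 then show ?thesis using ent_gap0[OF assms(1,2)] by (simp add: add.commute power2_commute)
  next
    case 3
    let ?g = "\<lambda>t::real. t * ln t - t^2 / 2"
    have "?g ((1 - 1/2) *\<^sub>R s + (1/2) *\<^sub>R t) \<le> (1 - 1/2) * ?g s + (1/2) * ?g t"
      by (rule convex_onD[OF entg_convex]) (use assms 3 in auto)
    then have "?g ((s + t)/2) \<le> (?g s + ?g t) / 2" by (simp add: field_simps)
    moreover have "ent s = s * ln s" "ent t = t * ln t" "ent ((s+t)/2) = (s+t)/2 * ln ((s+t)/2)"
      using 3 by (auto simp: ent_def)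
    ultimately show ?thesis by (simp add: power2_eq_square field_simps)
  qed
qed

lemma Bk_lin2:
  fixes K :: "real^'a::finite \<Rightarrow> real^'a \<Rightarrow> real"
  assumes K: "Kok K Kc" and a: "bnd a" and b: "bnd b"
  shows "Bk K (\<lambda>x. p * a x + q * b x) x = p * Bk K a x + q * Bk K b x"
proof -
  have ia: "integrable TM (\<lambda>y. p * (K x y * a y))" by (intro integrable_mult_right Kok_int1[OF K a])
  have ib: "integrable TM (\<lambda>y. q * (K x y * b y))" by (intro integrable_mult_right Kok_int1[OF K b])
  have "(\<integral>y. K x y * (p * a y + q * b y) \<partial>TM) = (\<integral>y. p * (K x y * a y) + q * (K x y * b y) \<partial>(TM::(real^'a) measure))"
    by (simp add: algebra_simps)
  also have "\<dots> = p * (\<integral>y. K x y * a y \<partial>TM) + q * (\<integral>y. K x y * b y \<partial>(TM::(real^'a) measure))"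
    by (subst Bochner_Integration.integral_add[OF ia ib]) simp
  finally show ?thesis unfolding Bk_def by (simp add: algebra_simps)
qed

lemma Bk_bound:
  fixes K :: "real^'d::finite \<Rightarrow> real^'d \<Rightarrow> real"
  assumes K: "Kok K Kc" and m: "v \<in> borel_measurable TM" and C: "AE y in TM. \<bar>v y\<bar> \<le> C"
  shows "AE x in TM. \<bar>Bk K v x\<bar> \<le> Kc * vol TYPE('d) * C + Kc * C * vol TYPE('d::finite)"
  using C
proof eventually_elim
  case (elim x)
  have bv: "bnd v" using m C unfolding bnd_def by blast
  have "\<bar>\<integral>y. K x y \<partial>TM\<bar> \<le> Kc * vol TYPE('d)"
    by (rule int_bound[OF bnd_integrable[OF Kok_bnd1[OF K]]])
       (use Kok_nonneg[OF K] Kok_le[OF K] in \<open>auto simp: abs_le_iff intro: order_trans\<close>)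
  then have "\<bar>(\<integral>y. K x y \<partial>TM) * v x\<bar> \<le> Kc * vol TYPE('d) * C"
    using elim by (rule abs_mult_le)
  moreover have "\<bar>\<integral>y. K x y * v y \<partial>TM\<bar> \<le> Kc * C * vol TYPE('d)"
  proof (rule int_bound[OF Kok_int1[OF K bv]])
    show "AE y in TM. \<bar>K x y * v y\<bar> \<le> Kc * C"
      using C
    proof eventually_elim
      case (elim y)
      have "\<bar>K x y\<bar> \<le> Kc" using Kok_nonneg[OF K, of x y] Kok_le[OF K, of x y] by simp
      then show ?case using elim by (rule abs_mult_le)
    qed
  qed
  ultimately show ?case unfolding Bk_def by linarith
qed

lemma Bk_bnd: assumes K: "Kok K Kc" and v: "bnd v" shows "bnd (Bk K v)"
proof -
  obtain C where C: "AE y in TM. \<bar>v y\<bar> \<le> C" using v unfolding bnd_def by blast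
  show ?thesis unfolding bnd_def using Bk_meas[OF K v] Bk_bound[OF K bndD[OF v] C] by blast
qed

lemma Bk_lim:
  assumes K: "Kok K Kc" and wm: "\<And>j. w j \<in> borel_measurable TM" and vm: "v \<in> borel_measurable TM"
    and C: "AE y in TM. \<forall>j. \<bar>w j y\<bar> \<le> C"
    and L: "AE y in TM. (\<lambda>j. w j y) \<longlonglongrightarrow> v y"
    and Lx: "(\<lambda>j. w j x) \<longlonglongrightarrow> v x"
  shows "(\<lambda>j. Bk K (w j) x) \<longlonglongrightarrow> Bk K v x"
proof -
  have mK: "(\<lambda>y. K x y) \<in> borel_measurable TM" by (rule Kok_meas1[OF K])
  have "(\<lambda>j. \<integral>y. K x y * w j y \<partial>TM) \<longlonglongrightarrow> (\<integral>y. K x y * v y \<partial>TM)"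
  proof (rule integral_dominated_convergence[where w="\<lambda>y. Kc * C"])
    show "(\<lambda>y. K x y * v y) \<in> borel_measurable TM" using mK vm by (rule borel_measurable_times)
    show "(\<lambda>y. K x y * w j y) \<in> borel_measurable TM" for j using mK wm by (rule borel_measurable_times)
    show "integrable TM (\<lambda>y. Kc * C)" by simp
    show "AE y in TM. (\<lambda>j. K x y * w j y) \<longlonglongrightarrow> K x y * v y"
      using L by eventually_elim (rule tendsto_mult_left)
    show "AE y in TM. norm (K x y * w j y) \<le> Kc * C" for j
      using C
    proof eventually_elim
      case (elim y)
      have "\<bar>K x y\<bar> \<le> Kc" using Kok_nonneg[OF K, of x y] Kok_le[OF K, of x y] by simp
      then show ?case using elim by (simp add: abs_mult_le)
    qed
  qed
  moreover have "(\<lambda>j. (\<integral>y. K x y \<partial>TM) * w j x) \<longlonglongrightarrow> (\<integral>y. K x y \<partial>TM) * v x"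
    using Lx by (rule tendsto_mult_left)
  ultimately show ?thesis unfolding Bk_def by (intro tendsto_diff)
qed

lemma adm_meas: "w \<in> adm_set n \<Longrightarrow> i \<le> n \<Longrightarrow> w i \<in> borel_measurable (TM::(real^'d::finite) measure)"
  by (simp add: adm_set_def L2_def)

lemma adm_AE01:
  assumes "(w::nat \<Rightarrow> real^'d::finite \<Rightarrow> real) \<in> adm_set n"
  shows "AE x in TM. \<forall>i\<le>n. 0 \<le> w i x \<and> w i x \<le> 1"
proof -
  have a: "AE x in TM. \<forall>i\<in>{..n}. 0 \<le> w i x"
    using assms unfolding adm_set_def by (intro AE_finite_allI) auto
  have b: "AE x in TM. (\<Sum>i\<le>n. w i x) = 1" using assms unfolding adm_set_def by blast
  from a b show ?thesis
  proof eventually_elim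
    case (elim x)
    have "w i x \<le> 1" if "i \<le> n" for i
    proof -
      have "w i x \<le> (\<Sum>j\<le>n. w j x)" using elim that by (intro member_le_sum) auto
      then show ?thesis using elim by simp
    qed
    then show ?case using elim by auto
  qed
qed

lemma adm_AE01i:
  assumes "(w::nat \<Rightarrow> real^'d::finite \<Rightarrow> real) \<in> adm_set n" "i \<le> n"
  shows "AE x in TM. 0 \<le> w i x \<and> w i x \<le> 1"
  using adm_AE01[OF assms(1)] by eventually_elim (use assms(2) in auto)

lemma adm_bnd:
  assumes "(w::nat \<Rightarrow> real^'d::finite \<Rightarrow> real) \<in> adm_set n" "i \<le> n"
  shows "bnd (w i)"
  unfolding bnd_def
proof (intro conjI exI)
  show "w i \<in> borel_measurable TM" by (rule adm_meas[OF assms])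
  show "AE x in TM. \<bar>w i x\<bar> \<le> 1" using adm_AE01i[OF assms] by eventually_elim auto
qed

lemma adm_ent_bnd:
  assumes "(w::nat \<Rightarrow> real^'d::finite \<Rightarrow> real) \<in> adm_set n" "i \<le> n"
  shows "bnd (\<lambda>x. ent (w i x))"
  unfolding bnd_def
proof (intro conjI exI)
  show "(\<lambda>x. ent (w i x)) \<in> borel_measurable TM"
    using measurable_compose[OF adm_meas[OF assms] ent_meas] by simp
  show "AE x in TM. \<bar>ent (w i x)\<bar> \<le> 1" using adm_AE01i[OF assms] by eventually_elim (auto intro: ent_bound)
qed

lemma int_mult_bnd:
  fixes mu :: "real^'d::finite \<Rightarrow> real"
  assumes mu: "integrable TM mu" and w: "bnd w"
  shows "integrable TM (\<lambda>x. mu x * w x)"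
proof -
  obtain C where C: "AE x in TM. \<bar>w x\<bar> \<le> C" using w unfolding bnd_def by blast
  show ?thesis
  proof (rule Bochner_Integration.integrable_bound[where f="\<lambda>x. C * mu x"])
    show "integrable TM (\<lambda>x. C * mu x)" using mu by (rule integrable_mult_right)
    show "(\<lambda>x. mu x * w x) \<in> borel_measurable TM"
      using borel_measurable_integrable[OF mu] bndD[OF w] by (rule borel_measurable_times)
    show "AE x in TM. norm (mu x * w x) \<le> norm (C * mu x)"
      using C
    proof eventually_elim
      case (elim x)
      then have "\<bar>mu x\<bar> * \<bar>w x\<bar> \<le> \<bar>mu x\<bar> * \<bar>C\<bar>" by (intro mult_left_mono) auto
      then show ?case by (simp add: abs_mult mult.commute)
    qed
  qed
qed

definition Fk :: "nat \<Rightarrow> (nat \<Rightarrow> nat \<Rightarrow> real) \<Rightarrow> (real^'d::finite \<Rightarrow> real^'d \<Rightarrow> real)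
    \<Rightarrow> (nat \<Rightarrow> real^'d \<Rightarrow> real) \<Rightarrow> (nat \<Rightarrow> real^'d \<Rightarrow> real) \<Rightarrow> real" where
  "Fk n c K \<mu> w = (\<Sum>i\<le>n. \<integral>x. (ent (w i x)
        + (\<Sum>k\<le>n. c i k * Bk K (w k) x * w i x)
        - \<mu> i x * w i x) \<partial>TM)"

lemma F_mu_Fk: "F_mu n c \<rho> \<epsilon> \<mu> w = Fk n c (K_eps \<rho> \<epsilon>) \<mu> w"
  unfolding F_mu_def Fk_def
  by (simp add: B_eps_def Bk_def)

definition Ent where "Ent n (w::nat \<Rightarrow> real^'d::finite \<Rightarrow> real) = (\<Sum>i\<le>n. \<integral>x. ent (w i x) \<partial>TM)"
definition Qf where "Qf n c K (w::nat \<Rightarrow> real^'d::finite \<Rightarrow> real) =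
   (\<Sum>i\<le>n. \<Sum>k\<le>n. c i k * (\<integral>x. Bk K (w k) x * w i x \<partial>TM))"
definition Lf where "Lf n \<mu> (w::nat \<Rightarrow> real^'d::finite \<Rightarrow> real) = (\<Sum>i\<le>n. \<integral>x. \<mu> i x * w i x \<partial>TM)"

lemma Fk_split:
  assumes K: "Kok K Kc" and w: "w \<in> adm_set n" and mu: "\<And>i. i \<le> n \<Longrightarrow> integrable TM (\<mu> i)"
  shows "Fk n c K \<mu> w = Ent n w + Qf n c K w - Lf n \<mu> w"
proof -
  have "(\<integral>x. (ent (w i x) + (\<Sum>k\<le>n. c i k * Bk K (w k) x * w i x) - \<mu> i x * w i x) \<partial>TM)
      = (\<integral>x. ent (w i x) \<partial>TM) + (\<Sum>k\<le>n. c i k * (\<integral>x. Bk K (w k) x * w i x \<partial>TM))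
        - (\<integral>x. \<mu> i x * w i x \<partial>TM)" if i: "i \<le> n" for i
  proof -
    have ik: "integrable TM (\<lambda>x. c i k * (Bk K (w k) x * w i x))" if "k \<le> n" for k
      by (intro integrable_mult_right bnd_integrable bnd_mult Bk_bnd[OF K] adm_bnd[OF w] i that)
    have i1: "integrable TM (\<lambda>x. ent (w i x))" by (rule bnd_integrable[OF adm_ent_bnd[OF w i]])
    have i2: "integrable TM (\<lambda>x. \<Sum>k\<le>n. c i k * (Bk K (w k) x * w i x))"
      by (rule Bochner_Integration.integrable_sum) (use ik in auto)
    have i3: "integrable TM (\<lambda>x. \<mu> i x * w i x)" by (rule int_mult_bnd[OF mu[OF i] adm_bnd[OF w i]])
    have "(\<integral>x. (ent (w i x) + (\<Sum>k\<le>n. c i k * Bk K (w k) x * w i x) - \<mu> i x * w i x) \<partial>TM)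
        = (\<integral>x. (ent (w i x) + (\<Sum>k\<le>n. c i k * (Bk K (w k) x * w i x)) - \<mu> i x * w i x) \<partial>TM)"
      by (simp add: mult.assoc)
    also have "\<dots> = (\<integral>x. ent (w i x) \<partial>TM) + (\<integral>x. (\<Sum>k\<le>n. c i k * (Bk K (w k) x * w i x)) \<partial>TM)
        - (\<integral>x. \<mu> i x * w i x \<partial>TM)"
      using i1 i2 i3 by (simp add: Bochner_Integration.integral_diff Bochner_Integration.integral_add)
    also have "(\<integral>x. (\<Sum>k\<le>n. c i k * (Bk K (w k) x * w i x)) \<partial>TM) = (\<Sum>k\<le>n. c i k * (\<integral>x. Bk K (w k) x * w i x \<partial>TM))"
      by (subst Bochner_Integration.integral_sum) (use ik in auto)
    finally show ?thesis .
  qed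
  then show ?thesis unfolding Fk_def Ent_def Qf_def Lf_def
    by (simp add: sum.distrib sum_subtractf)
qed

lemma adm_mid:
  assumes u: "(u::nat \<Rightarrow> real^'d::finite \<Rightarrow> real) \<in> adm_set n" and v: "v \<in> adm_set n"
  shows "(\<lambda>i x. (u i x + v i x) / 2) \<in> adm_set n"
proof -
  have b: "bnd (\<lambda>x. (u i x + v i x) / 2)" if "i \<le> n" for i
  proof -
    have "bnd (\<lambda>x. (u i x + v i x) * (1/2))"
      by (intro bnd_mult bnd_add adm_bnd[OF u that] adm_bnd[OF v that] bnd_const)
    then show ?thesis by simp
  qed
  have "L2 TM (\<lambda>x. (u i x + v i x) / 2)" if "i \<le> n" for i
  proof -
    have "integrable TM (\<lambda>x. (u i x + v i x) / 2 * ((u i x + v i x) / 2))"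
      by (rule bnd_integrable[OF bnd_mult[OF b[OF that] b[OF that]]])
    then show ?thesis unfolding L2_def using bndD[OF b[OF that]] by (simp add: power2_eq_square)
  qed
  moreover have "AE x in TM. 0 \<le> (u i x + v i x) / 2" if "i \<le> n" for i
    using adm_AE01i[OF u that] adm_AE01i[OF v that] by eventually_elim auto
  moreover have "AE x in TM. (\<Sum>i\<le>n. (u i x + v i x) / 2) = 1"
  proof -
    have "AE x in TM. (\<Sum>i\<le>n. u i x) = 1" "AE x in TM. (\<Sum>i\<le>n. v i x) = 1"
      using u v unfolding adm_set_def by auto
    then show ?thesis
      by eventually_elim (simp add: sum_divide_distrib[symmetric] sum.distrib)
  qed
  ultimately show ?thesis unfolding adm_set_def by auto
qed

lemma Ent_gap:
  assumes u: "(u::nat \<Rightarrow> real^'d::finite \<Rightarrow> real) \<in> adm_set n" and v: "v \<in> adm_set n"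
  shows "(\<Sum>i\<le>n. \<integral>x. (u i x - v i x)^2 / 4 \<partial>TM) \<le> Ent n u + Ent n v - 2 * Ent n (\<lambda>i x. (u i x + v i x) / 2)"
proof -
  have h: "(\<lambda>i x. (u i x + v i x) / 2) \<in> adm_set n" by (rule adm_mid[OF u v])
  have "(\<integral>x. (u i x - v i x)^2 / 4 \<partial>TM) \<le> (\<integral>x. ent (u i x) \<partial>TM) + (\<integral>x. ent (v i x) \<partial>TM)
      - 2 * (\<integral>x. ent ((u i x + v i x) / 2) \<partial>TM)" if i: "i \<le> n" for i
  proof -
    have iu: "integrable TM (\<lambda>x. ent (u i x))" by (rule bnd_integrable[OF adm_ent_bnd[OF u i]])
    have iv: "integrable TM (\<lambda>x. ent (v i x))" by (rule bnd_integrable[OF adm_ent_bnd[OF v i]])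
    have ih: "integrable TM (\<lambda>x. ent ((u i x + v i x) / 2))"
      using bnd_integrable[OF adm_ent_bnd[OF h i]] by simp
    have id: "integrable TM (\<lambda>x. (u i x - v i x)^2 / 4)"
    proof -
      have "bnd (\<lambda>x. (u i x - v i x) * (u i x - v i x) * (1/4))"
        by (intro bnd_mult bnd_diff adm_bnd[OF u i] adm_bnd[OF v i] bnd_const)
      then show ?thesis by (auto dest: bnd_integrable simp: power2_eq_square)
    qed
    have "(\<integral>x. (u i x - v i x)^2 / 4 \<partial>TM) \<le> (\<integral>x. ent (u i x) + ent (v i x) - 2 * ent ((u i x + v i x) / 2) \<partial>TM)"
    proof (rule Bochner_Integration.integral_mono_AE[OF id])
      show "integrable TM (\<lambda>x. ent (u i x) + ent (v i x) - 2 * ent ((u i x + v i x) / 2))"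
        using iu iv ih by auto
      show "AE x in TM. (u i x - v i x)^2 / 4 \<le> ent (u i x) + ent (v i x) - 2 * ent ((u i x + v i x) / 2)"
        using adm_AE01i[OF u i] adm_AE01i[OF v i] by eventually_elim (intro ent_gap, auto)
    qed
    also have "\<dots> = (\<integral>x. ent (u i x) \<partial>TM) + (\<integral>x. ent (v i x) \<partial>TM) - 2 * (\<integral>x. ent ((u i x + v i x) / 2) \<partial>TM)"
      using iu iv ih by (simp add: Bochner_Integration.integral_diff Bochner_Integration.integral_add)
    finally show ?thesis .
  qed
  then have "(\<Sum>i\<le>n. \<integral>x. (u i x - v i x)^2 / 4 \<partial>TM) \<le> (\<Sum>i\<le>n. (\<integral>x. ent (u i x) \<partial>TM) + (\<integral>x. ent (v i x) \<partial>TM)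
      - 2 * (\<integral>x. ent ((u i x + v i x) / 2) \<partial>TM))"
    by (intro sum_mono) auto
  also have "\<dots> = Ent n u + Ent n v - 2 * Ent n (\<lambda>i x. (u i x + v i x) / 2)"
    unfolding Ent_def by (simp add: sum.distrib sum_subtractf sum_distrib_left)
  finally show ?thesis .
qed

lemma Lf_mid:
  assumes u: "(u::nat \<Rightarrow> real^'d::finite \<Rightarrow> real) \<in> adm_set n" and v: "v \<in> adm_set n"
    and mu: "\<And>i. i \<le> n \<Longrightarrow> integrable TM (\<mu> i)"
  shows "Lf n \<mu> u + Lf n \<mu> v = 2 * Lf n \<mu> (\<lambda>i x. (u i x + v i x) / 2)"
proof -
  have "(\<integral>x. \<mu> i x * u i x \<partial>TM) + (\<integral>x. \<mu> i x * v i x \<partial>TM) = 2 * (\<integral>x. \<mu> i x * ((u i x + v i x) / 2) \<partial>TM)"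
    if i: "i \<le> n" for i
  proof -
    have iu: "integrable TM (\<lambda>x. \<mu> i x * u i x)" by (rule int_mult_bnd[OF mu[OF i] adm_bnd[OF u i]])
    have iv: "integrable TM (\<lambda>x. \<mu> i x * v i x)" by (rule int_mult_bnd[OF mu[OF i] adm_bnd[OF v i]])
    have "(\<integral>x. \<mu> i x * ((u i x + v i x) / 2) \<partial>TM) = (\<integral>x. (\<mu> i x * u i x + \<mu> i x * v i x) / 2 \<partial>TM)"
      by (simp add: algebra_simps)
    also have "\<dots> = ((\<integral>x. \<mu> i x * u i x \<partial>TM) + (\<integral>x. \<mu> i x * v i x \<partial>TM)) / 2"
      using iu iv by (simp add: Bochner_Integration.integral_add)
    finally show ?thesis by simp
  qed
  then show ?thesis unfolding Lf_def by (simp add: sum.distrib[symmetric] sum_distrib_left)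
qed


lemma Qf_gap:
  assumes K: "Kok K Kc" and c: "\<forall>\<xi>::nat \<Rightarrow> real. (\<Sum>i\<le>n. \<Sum>j\<le>n. \<xi> i * c i j * \<xi> j) \<ge> 0"
    and u: "(u::nat \<Rightarrow> real^'d::finite \<Rightarrow> real) \<in> adm_set n" and v: "v \<in> adm_set n"
  shows "0 \<le> Qf n c K u + Qf n c K v - 2 * Qf n c K (\<lambda>i x. (u i x + v i x) / 2)"
proof -
  define d where "d i x = u i x - v i x" for i x
  have bd: "bnd (d i)" if "i \<le> n" for i
    unfolding d_def by (intro bnd_diff adm_bnd[OF u that] adm_bnd[OF v that])
  have key: "(\<integral>x. Bk K (u k) x * u i x \<partial>TM) + (\<integral>x. Bk K (v k) x * v i x \<partial>TM)
      - 2 * (\<integral>x. Bk K (\<lambda>x. (u k x + v k x) / 2) x * ((u i x + v i x) / 2) \<partial>TM)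
      = (\<integral>x. Bk K (d k) x * d i x \<partial>TM) / 2" if i: "i \<le> n" and k: "k \<le> n" for i k
  proof -
    have bu: "bnd (u j)" "bnd (v j)" if "j \<le> n" for j using adm_bnd[OF u that] adm_bnd[OF v that] by auto
    have eh: "Bk K (\<lambda>x. (u k x + v k x) / 2) x = (Bk K (u k) x + Bk K (v k) x) / 2" for x
    proof -
      have "(\<lambda>x. (u k x + v k x) / 2) = (\<lambda>x. 1/2 * u k x + 1/2 * v k x)" by (simp add: fun_eq_iff field_simps)
      then show ?thesis using Bk_lin2[OF K bu[OF k], of "1/2" "1/2" x] by simp
    qed
    have ed: "Bk K (d k) x = Bk K (u k) x - Bk K (v k) x" for x
    proof -
      have "d k = (\<lambda>x. 1 * u k x + (-1) * v k x)" by (simp add: fun_eq_iff d_def)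
      then show ?thesis using Bk_lin2[OF K bu[OF k], of 1 "-1" x] by simp
    qed
    have i1: "integrable TM (\<lambda>x. Bk K (u k) x * u i x)"
      by (intro bnd_integrable bnd_mult Bk_bnd[OF K] bu i k)
    have i2: "integrable TM (\<lambda>x. Bk K (v k) x * v i x)"
      by (intro bnd_integrable bnd_mult Bk_bnd[OF K] bu i k)
    have i3: "integrable TM (\<lambda>x. Bk K (u k) x * v i x)"
      by (intro bnd_integrable bnd_mult Bk_bnd[OF K] bu i k)
    have i4: "integrable TM (\<lambda>x. Bk K (v k) x * u i x)"
      by (intro bnd_integrable bnd_mult Bk_bnd[OF K] bu i k)
    have "(\<integral>x. Bk K (\<lambda>x. (u k x + v k x) / 2) x * ((u i x + v i x) / 2) \<partial>TM)
        = (\<integral>x. (Bk K (u k) x * u i x + Bk K (v k) x * v i x + Bk K (u k) x * v i x + Bk K (v k) x * u i x) / 4 \<partial>TM)"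
      unfolding eh by (simp add: algebra_simps)
    also have "\<dots> = ((\<integral>x. Bk K (u k) x * u i x \<partial>TM) + (\<integral>x. Bk K (v k) x * v i x \<partial>TM)
         + (\<integral>x. Bk K (u k) x * v i x \<partial>TM) + (\<integral>x. Bk K (v k) x * u i x \<partial>TM)) / 4"
      using i1 i2 i3 i4 by (simp add: Bochner_Integration.integral_add)
    finally have h1: "(\<integral>x. Bk K (\<lambda>x. (u k x + v k x) / 2) x * ((u i x + v i x) / 2) \<partial>TM) = \<dots>" .
    have "(\<integral>x. Bk K (d k) x * d i x \<partial>TM)
        = (\<integral>x. (Bk K (u k) x * u i x + Bk K (v k) x * v i x) - (Bk K (u k) x * v i x + Bk K (v k) x * u i x) \<partial>TM)"
      unfolding ed by (simp add: d_def algebra_simps)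
    also have "\<dots> = ((\<integral>x. Bk K (u k) x * u i x \<partial>TM) + (\<integral>x. Bk K (v k) x * v i x \<partial>TM))
         - ((\<integral>x. Bk K (u k) x * v i x \<partial>TM) + (\<integral>x. Bk K (v k) x * u i x \<partial>TM))"
      using i1 i2 i3 i4 by (simp add: Bochner_Integration.integral_add Bochner_Integration.integral_diff)
    finally have h2: "(\<integral>x. Bk K (d k) x * d i x \<partial>TM) = \<dots>" .
    show ?thesis unfolding h1 h2 by (simp add: field_simps)
  qed
  define A where "A i k = (\<integral>x. Bk K (u k) x * u i x \<partial>TM)" for i k
  define B where "B i k = (\<integral>x. Bk K (v k) x * v i x \<partial>TM)" for i k
  define H where "H i k = (\<integral>x. Bk K (\<lambda>x. (u k x + v k x) / 2) x * ((u i x + v i x) / 2) \<partial>TM)" for i k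
  define D where "D i k = (\<integral>x. Bk K (d k) x * d i x \<partial>TM)" for i k
  have key': "c i k * A i k + c i k * B i k - 2 * (c i k * H i k) = c i k * D i k / 2" if "i \<le> n" "k \<le> n" for i k
  proof -
    have e: "A i k + B i k - 2 * H i k = D i k / 2"
      unfolding A_def B_def H_def D_def by (rule key[OF that])
    have "c i k * A i k + c i k * B i k - 2 * (c i k * H i k) = c i k * (A i k + B i k - 2 * H i k)"
      by (simp add: algebra_simps)
    also have "\<dots> = c i k * D i k / 2" unfolding e by simp
    finally show ?thesis .
  qed
  have "Qf n c K u + Qf n c K v - 2 * Qf n c K (\<lambda>i x. (u i x + v i x) / 2)
      = (\<Sum>i\<le>n. \<Sum>k\<le>n. c i k * A i k) + (\<Sum>i\<le>n. \<Sum>k\<le>n. c i k * B i k) - 2 * (\<Sum>i\<le>n. \<Sum>k\<le>n. c i k * H i k)"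
    unfolding Qf_def A_def B_def H_def by simp
  also have "\<dots> = (\<Sum>i\<le>n. \<Sum>k\<le>n. c i k * A i k + c i k * B i k - 2 * (c i k * H i k))"
    by (simp add: sum.distrib sum_subtractf sum_distrib_left)
  also have "\<dots> = (\<Sum>i\<le>n. \<Sum>k\<le>n. c i k * D i k / 2)"
    by (intro sum.cong refl key') auto
  also have "\<dots> = Qf n c K d / 2"
    unfolding Qf_def D_def by (simp add: sum_divide_distrib)
  finally have "Qf n c K u + Qf n c K v - 2 * Qf n c K (\<lambda>i x. (u i x + v i x) / 2) = Qf n c K d / 2" .
  moreover have "0 \<le> Qf n c K d" unfolding Qf_def by (rule Q_nonneg[OF K c bd])
  ultimately show ?thesis by simp
qed

lemma Fk_strong:
  assumes K: "Kok K Kc" and c: "\<forall>\<xi>::nat \<Rightarrow> real. (\<Sum>i\<le>n. \<Sum>j\<le>n. \<xi> i * c i j * \<xi> j) \<ge> 0"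
    and u: "(u::nat \<Rightarrow> real^'d::finite \<Rightarrow> real) \<in> adm_set n" and v: "v \<in> adm_set n"
    and mu: "\<And>i. i \<le> n \<Longrightarrow> integrable TM (\<mu> i)"
  shows "Fk n c K \<mu> (\<lambda>i x. (u i x + v i x) / 2) \<le> (Fk n c K \<mu> u + Fk n c K \<mu> v) / 2
           - (\<Sum>i\<le>n. \<integral>x. (u i x - v i x)^2 / 4 \<partial>TM) / 2"
proof -
  have h: "(\<lambda>i x. (u i x + v i x) / 2) \<in> adm_set n" by (rule adm_mid[OF u v])
  have su: "Fk n c K \<mu> u = Ent n u + Qf n c K u - Lf n \<mu> u" by (intro Fk_split[OF K u] mu)
  have sv: "Fk n c K \<mu> v = Ent n v + Qf n c K v - Lf n \<mu> v" by (intro Fk_split[OF K v] mu)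
  have sh: "Fk n c K \<mu> (\<lambda>i x. (u i x + v i x) / 2) = Ent n (\<lambda>i x. (u i x + v i x) / 2)
     + Qf n c K (\<lambda>i x. (u i x + v i x) / 2) - Lf n \<mu> (\<lambda>i x. (u i x + v i x) / 2)" by (intro Fk_split[OF K h] mu)
  have lm: "Lf n \<mu> u + Lf n \<mu> v = 2 * Lf n \<mu> (\<lambda>i x. (u i x + v i x) / 2)" by (intro Lf_mid[OF u v] mu)
  show ?thesis
    unfolding su sv sh
    using Ent_gap[OF u v] Qf_gap[OF K c u v] lm by (simp add: field_simps)
qed

lemma Fk_lower:
  assumes K: "Kok K Kc" and c: "\<forall>\<xi>::nat \<Rightarrow> real. (\<Sum>i\<le>n. \<Sum>j\<le>n. \<xi> i * c i j * \<xi> j) \<ge> 0"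
    and w: "(w::nat \<Rightarrow> real^'d::finite \<Rightarrow> real) \<in> adm_set n"
    and mu: "\<And>i. i \<le> n \<Longrightarrow> integrable TM (\<mu> i)"
  shows "- (real (Suc n) * vol TYPE('d)) - (\<Sum>i\<le>n. \<integral>x. \<bar>\<mu> i x\<bar> \<partial>TM) \<le> Fk n c K \<mu> w"
proof -
  have "- vol TYPE('d) \<le> (\<integral>x. ent (w i x) \<partial>TM)" if i: "i \<le> n" for i
  proof -
    have "\<bar>\<integral>x. ent (w i x) \<partial>TM\<bar> \<le> 1 * vol TYPE('d)"
      by (rule int_bound[OF bnd_integrable[OF adm_ent_bnd[OF w i]]])
         (use adm_AE01i[OF w i] in \<open>eventually_elim, auto intro: ent_bound\<close>)
    then show ?thesis by simp
  qed
  then have "(\<Sum>i\<le>n. - vol TYPE('d)) \<le> Ent n w" unfolding Ent_def by (intro sum_mono) auto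
  then have e: "- (real (Suc n) * vol TYPE('d)) \<le> Ent n w" by simp
  have q: "0 \<le> Qf n c K w" unfolding Qf_def by (rule Q_nonneg[OF K c adm_bnd[OF w]])
  have "(\<integral>x. \<mu> i x * w i x \<partial>TM) \<le> (\<integral>x. \<bar>\<mu> i x\<bar> \<partial>TM)" if i: "i \<le> n" for i
  proof (rule Bochner_Integration.integral_mono_AE)
    show "integrable TM (\<lambda>x. \<mu> i x * w i x)" by (rule int_mult_bnd[OF mu[OF i] adm_bnd[OF w i]])
    show "integrable TM (\<lambda>x. \<bar>\<mu> i x\<bar>)" using mu[OF i] by auto
    show "AE x in TM. \<mu> i x * w i x \<le> \<bar>\<mu> i x\<bar>"
      using adm_AE01i[OF w i]
    proof eventually_elim
      case (elim x)
      have "\<mu> i x * w i x \<le> \<bar>\<mu> i x\<bar> * w i x" using elim by (intro mult_right_mono) auto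
      also have "\<dots> \<le> \<bar>\<mu> i x\<bar> * 1" using elim by (intro mult_left_mono) auto
      finally show ?case by simp
    qed
  qed
  then have l: "Lf n \<mu> w \<le> (\<Sum>i\<le>n. \<integral>x. \<bar>\<mu> i x\<bar> \<partial>TM)" unfolding Lf_def by (intro sum_mono) auto
  have sw: "Fk n c K \<mu> w = Ent n w + Qf n c K w - Lf n \<mu> w" by (intro Fk_split[OF K w] mu)
  show ?thesis unfolding sw using e q l by linarith
qed

lemma Fk_lim:
  assumes K: "Kok K Kc"
    and w: "\<And>j. (w j :: nat \<Rightarrow> real^'d::finite \<Rightarrow> real) \<in> adm_set n" and u: "u \<in> adm_set n"
    and mu: "\<And>i. i \<le> n \<Longrightarrow> integrable TM (\<mu> i)"
    and L: "AE x in TM. \<forall>i\<le>n. (\<lambda>j. w j i x) \<longlonglongrightarrow> u i x"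
  shows "(\<lambda>j. Fk n c K \<mu> (w j)) \<longlonglongrightarrow> Fk n c K \<mu> u"
proof -
  have W01: "AE x in TM. \<forall>j. \<forall>i\<le>n. 0 \<le> w j i x \<and> w j i x \<le> 1"
    by (subst AE_all_countable) (use adm_AE01[OF w] in blast)
  have U01: "AE x in TM. \<forall>i\<le>n. 0 \<le> u i x \<and> u i x \<le> 1" by (rule adm_AE01[OF u])
  have Li: "AE x in TM. (\<lambda>j. w j i x) \<longlonglongrightarrow> u i x" if "i \<le> n" for i
    using L by eventually_elim (use that in auto)
  have E: "(\<lambda>j. Ent n (w j)) \<longlonglongrightarrow> Ent n u"
    unfolding Ent_def
  proof (intro tendsto_sum)
    fix i assume "i \<in> {..n}" then have i: "i \<le> n" by simp
    show "(\<lambda>j. \<integral>x. ent (w j i x) \<partial>TM) \<longlonglongrightarrow> (\<integral>x. ent (u i x) \<partial>TM)"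
    proof (rule integral_dominated_convergence[where w="\<lambda>x. 1"])
      show "(\<lambda>x. ent (u i x)) \<in> borel_measurable TM" by (rule bndD[OF adm_ent_bnd[OF u i]])
      show "(\<lambda>x. ent (w j i x)) \<in> borel_measurable TM" for j by (rule bndD[OF adm_ent_bnd[OF w i]])
      show "integrable TM (\<lambda>x. 1::real)" by simp
      show "AE x in TM. (\<lambda>j. ent (w j i x)) \<longlonglongrightarrow> ent (u i x)"
        using W01 U01 Li[OF i]
      proof eventually_elim
        case (elim x)
        show ?case
          by (rule continuous_on_tendsto_compose[OF ent_cont elim(3)]) (use elim i in auto)
      qed
      show "AE x in TM. norm (ent (w j i x)) \<le> 1" for j
        using adm_AE01i[OF w[of j] i] by eventually_elim (auto intro: ent_bound)
    qed
  qed
  have Lm: "(\<lambda>j. Lf n \<mu> (w j)) \<longlonglongrightarrow> Lf n \<mu> u"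
    unfolding Lf_def
  proof (intro tendsto_sum)
    fix i assume "i \<in> {..n}" then have i: "i \<le> n" by simp
    show "(\<lambda>j. \<integral>x. \<mu> i x * w j i x \<partial>TM) \<longlonglongrightarrow> (\<integral>x. \<mu> i x * u i x \<partial>TM)"
    proof (rule integral_dominated_convergence[where w="\<lambda>x. \<bar>\<mu> i x\<bar>"])
      show "(\<lambda>x. \<mu> i x * u i x) \<in> borel_measurable TM"
        by (rule borel_measurable_integrable[OF int_mult_bnd[OF mu[OF i] adm_bnd[OF u i]]])
      show "(\<lambda>x. \<mu> i x * w j i x) \<in> borel_measurable TM" for j
        by (rule borel_measurable_integrable[OF int_mult_bnd[OF mu[OF i] adm_bnd[OF w i]]])
      show "integrable TM (\<lambda>x. \<bar>\<mu> i x\<bar>)" using mu[OF i] by auto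
      show "AE x in TM. (\<lambda>j. \<mu> i x * w j i x) \<longlonglongrightarrow> \<mu> i x * u i x"
        using Li[OF i] by eventually_elim (rule tendsto_mult_left)
      show "AE x in TM. norm (\<mu> i x * w j i x) \<le> \<bar>\<mu> i x\<bar>" for j
        using adm_AE01i[OF w[of j] i]
      proof eventually_elim
        case (elim x)
        have "\<bar>\<mu> i x\<bar> * \<bar>w j i x\<bar> \<le> \<bar>\<mu> i x\<bar> * 1" using elim by (intro mult_left_mono) auto
        then show ?case by (simp add: abs_mult)
      qed
    qed
  qed
  define Bc where "Bc = Kc * vol TYPE('d) * 1 + Kc * 1 * vol TYPE('d)"
  have Q: "(\<lambda>j. Qf n c K (w j)) \<longlonglongrightarrow> Qf n c K u"
    unfolding Qf_def
  proof (intro tendsto_sum tendsto_mult_left)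
    fix i k assume "i \<in> {..n}" "k \<in> {..n}" then have i: "i \<le> n" and k: "k \<le> n" by auto
    have Wk: "AE y in TM. \<forall>j. \<bar>w j k y\<bar> \<le> 1"
      using W01 by eventually_elim (use k in auto)
    show "(\<lambda>j. \<integral>x. Bk K (w j k) x * w j i x \<partial>TM) \<longlonglongrightarrow> (\<integral>x. Bk K (u k) x * u i x \<partial>TM)"
    proof (rule integral_dominated_convergence[where w="\<lambda>x. Bc * 1"])
      show "(\<lambda>x. Bk K (u k) x * u i x) \<in> borel_measurable TM"
        by (intro bndD bnd_mult Bk_bnd[OF K] adm_bnd[OF u] i k)
      show "(\<lambda>x. Bk K (w j k) x * w j i x) \<in> borel_measurable TM" for j
        by (intro bndD bnd_mult Bk_bnd[OF K] adm_bnd[OF w] i k)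
      show "integrable TM (\<lambda>x. Bc * 1)" by simp
      show "AE x in TM. (\<lambda>j. Bk K (w j k) x * w j i x) \<longlonglongrightarrow> Bk K (u k) x * u i x"
        using L
      proof eventually_elim
        case (elim x)
        have "(\<lambda>j. Bk K (w j k) x) \<longlonglongrightarrow> Bk K (u k) x"
          by (rule Bk_lim[OF K _ _ Wk Li[OF k]]) (use elim k adm_meas[OF w k] adm_meas[OF u k] in auto)
        then show ?case by (rule tendsto_mult) (use elim i in auto)
      qed
      show "AE x in TM. norm (Bk K (w j k) x * w j i x) \<le> Bc * 1" for j
      proof -
        have "AE y in TM. \<bar>w j k y\<bar> \<le> 1" using adm_AE01i[OF w[of j] k] by eventually_elim auto
        from Bk_bound[OF K adm_meas[OF w[of j] k] this]
        have "AE x in TM. \<bar>Bk K (w j k) x\<bar> \<le> Bc" unfolding Bc_def .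
        then show ?thesis using adm_AE01i[OF w[of j] i]
        proof eventually_elim
          case (elim x)
          have "\<bar>w j i x\<bar> \<le> 1" using elim by auto
          with elim(1) show ?case unfolding real_norm_def by (rule abs_mult_le)
        qed
      qed
    qed
  qed
  have "(\<lambda>j. Ent n (w j) + Qf n c K (w j) - Lf n \<mu> (w j)) \<longlonglongrightarrow> Ent n u + Qf n c K u - Lf n \<mu> u"
    by (intro tendsto_diff tendsto_add E Q Lm)
  moreover have "Fk n c K \<mu> (w j) = Ent n (w j) + Qf n c K (w j) - Lf n \<mu> (w j)" for j
    by (intro Fk_split[OF K w] mu)
  moreover have "Fk n c K \<mu> u = Ent n u + Qf n c K u - Lf n \<mu> u"
    by (intro Fk_split[OF K u] mu)
  ultimately show ?thesis by simp
qed

lemma AE_summable: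
  fixes g :: "nat \<Rightarrow> real^'d::finite \<Rightarrow> real"
  assumes m: "\<And>j. g j \<in> borel_measurable TM" and i: "\<And>j. integrable TM (g j)"
    and s: "summable (\<lambda>j. \<integral>x. \<bar>g j x\<bar> \<partial>TM)"
  shows "AE x in TM. summable (\<lambda>j. \<bar>g j x\<bar>)"
proof -
  have mG: "(\<lambda>x. ennreal \<bar>g j x\<bar>) \<in> borel_measurable TM" for j using m[of j] by measurable
  have "(\<integral>\<^sup>+ x. (\<Sum>j. ennreal \<bar>g j x\<bar>) \<partial>TM) = (\<Sum>j. \<integral>\<^sup>+ x. ennreal \<bar>g j x\<bar> \<partial>TM)"
    by (rule nn_integral_suminf[OF mG])
  also have "\<dots> = (\<Sum>j. ennreal (\<integral>x. \<bar>g j x\<bar> \<partial>TM))"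
    using i by (intro arg_cong[where f=suminf] ext nn_integral_eq_integral) auto
  also have "\<dots> = ennreal (\<Sum>j. \<integral>x. \<bar>g j x\<bar> \<partial>TM)"
    by (rule suminf_ennreal2[OF _ s]) simp
  finally have fin: "(\<integral>\<^sup>+ x. (\<Sum>j. ennreal \<bar>g j x\<bar>) \<partial>TM) \<noteq> \<infinity>" by simp
  have "(\<lambda>x. \<Sum>j. ennreal \<bar>g j x\<bar>) \<in> borel_measurable TM" using mG by measurable
  from nn_integral_noteq_infinite[OF this fin]
  show ?thesis by eventually_elim (rule summable_suminf_not_top, auto)
qed

lemma AE_convergent:
  fixes f :: "nat \<Rightarrow> real^'d::finite \<Rightarrow> real"
  assumes m: "\<And>j. f j \<in> borel_measurable TM" and i: "\<And>j. integrable TM (f j)"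
    and s: "summable (\<lambda>j. \<integral>x. \<bar>f (Suc j) x - f j x\<bar> \<partial>TM)"
  shows "AE x in TM. convergent (\<lambda>j. f j x)"
proof -
  have "AE x in TM. summable (\<lambda>j. \<bar>f (Suc j) x - f j x\<bar>)"
    by (rule AE_summable[where g="\<lambda>j x. f (Suc j) x - f j x", OF _ _ s]) (use m i in auto)
  then show ?thesis
  proof eventually_elim
    case (elim x)
    then have "summable (\<lambda>j. f (Suc j) x - f j x)" by (rule summable_rabs_cancel)
    then have "(\<lambda>J. \<Sum>j<J. f (Suc j) x - f j x) \<longlonglongrightarrow> (\<Sum>j. f (Suc j) x - f j x)"
      by (rule summable_LIMSEQ)
    then have "(\<lambda>J. f 0 x + (\<Sum>j<J. f (Suc j) x - f j x)) \<longlonglongrightarrow> f 0 x + (\<Sum>j. f (Suc j) x - f j x)"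
      by (intro tendsto_add tendsto_const)
    then have "(\<lambda>J. f J x) \<longlonglongrightarrow> f 0 x + (\<Sum>j. f (Suc j) x - f j x)"
      by (simp add: sum_lessThan_telescope[where f="\<lambda>j. f j x"])
    then show ?case unfolding convergent_def by blast
  qed
qed

lemma abs_le_sq: assumes "0 < a" shows "\<bar>d\<bar> \<le> (a * d^2 + 1 / a) / (2::real)"
proof -
  have "0 \<le> (a * \<bar>d\<bar> - 1)^2" by simp
  then have "2 * a * \<bar>d\<bar> \<le> a^2 * d^2 + 1" by (simp add: power2_eq_square algebra_simps)
  then show ?thesis using assms by (simp add: field_simps power2_eq_square)
qed

lemma L1_L2:
  assumes d: "bnd (d :: real^'d::finite \<Rightarrow> real)" and a: "0 < a"
  shows "(\<integral>x. \<bar>d x\<bar> \<partial>TM) \<le> (a * (\<integral>x. (d x)^2 \<partial>TM) + vol TYPE('d) / a) / 2"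
proof -
  have i2: "integrable TM (\<lambda>x. (d x)^2)"
    using bnd_integrable[OF bnd_mult[OF d d]] by (simp add: power2_eq_square)
  have "(\<integral>x. \<bar>d x\<bar> \<partial>TM) \<le> (\<integral>x. (a * (d x)^2 + 1 / a) / 2 \<partial>TM)"
    by (intro Bochner_Integration.integral_mono integrable_abs abs_le_sq a bnd_integrable[OF d])
       (use i2 in auto)
  also have "\<dots> = (a * (\<integral>x. (d x)^2 \<partial>TM) + vol TYPE('d) / a) / 2"
    using i2 by (simp add: Bochner_Integration.integral_add)
  finally show ?thesis .
qed

lemma unique_min:
  assumes K: "Kok K Kc" and c: "\<forall>\<xi>::nat \<Rightarrow> real. (\<Sum>i\<le>n. \<Sum>j\<le>n. \<xi> i * c i j * \<xi> j) \<ge> 0"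
    and mu: "\<And>i. i \<le> n \<Longrightarrow> integrable TM (\<mu> i)"
    and u: "(u::nat \<Rightarrow> real^'d::finite \<Rightarrow> real) \<in> adm_set n" and v: "v \<in> adm_set n"
    and um: "\<forall>w\<in>adm_set n. Fk n c K \<mu> u \<le> Fk n c K \<mu> w"
    and vm: "\<forall>w\<in>adm_set n. Fk n c K \<mu> v \<le> Fk n c K \<mu> w"
  shows "\<forall>i\<le>n. AE x in TM. v i x = u i x"
proof (intro allI impI)
  fix i assume i: "i \<le> n"
  have h: "(\<lambda>i x. (u i x + v i x) / 2) \<in> adm_set n" by (rule adm_mid[OF u v])
  have st: "Fk n c K \<mu> (\<lambda>i x. (u i x + v i x) / 2) \<le> (Fk n c K \<mu> u + Fk n c K \<mu> v) / 2
           - (\<Sum>i\<le>n. \<integral>x. (u i x - v i x)^2 / 4 \<partial>TM) / 2"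
    by (rule Fk_strong[OF K c u v]) (rule mu)
  have "Fk n c K \<mu> u \<le> Fk n c K \<mu> (\<lambda>i x. (u i x + v i x) / 2)" using um h by blast
  moreover have "Fk n c K \<mu> v \<le> Fk n c K \<mu> u" using vm u by blast
  ultimately have S: "(\<Sum>i\<le>n. \<integral>x. (u i x - v i x)^2 / 4 \<partial>TM) \<le> 0" using st by (simp add: field_simps)
  have int: "integrable TM (\<lambda>x. (u i x - v i x)^2 / 4)" if "i \<le> n" for i
  proof -
    have "bnd (\<lambda>x. (u i x - v i x) * (u i x - v i x) * (1/4))"
      by (intro bnd_mult bnd_diff adm_bnd[OF u that] adm_bnd[OF v that] bnd_const)
    then show ?thesis by (auto dest: bnd_integrable simp: power2_eq_square)
  qed
  have nn: "0 \<le> (\<integral>x. (u i x - v i x)^2 / 4 \<partial>TM)" for i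
    by (rule Bochner_Integration.integral_nonneg) simp
  have "(\<Sum>i\<le>n. \<integral>x. (u i x - v i x)^2 / 4 \<partial>TM) = 0"
    using S by (intro antisym sum_nonneg) (auto intro: nn)
  then have "\<forall>i\<in>{..n}. (\<integral>x. (u i x - v i x)^2 / 4 \<partial>TM) = 0"
    by (subst sum_nonneg_eq_0_iff[symmetric]) (auto intro: nn)
  then have "(\<integral>x. (u i x - v i x)^2 / 4 \<partial>TM) = 0" using i by auto
  then have "AE x in TM. (u i x - v i x)^2 / 4 = 0"
    by (subst integral_nonneg_eq_0_iff_AE[symmetric]) (auto intro: int[OF i])
  then show "AE x in TM. v i x = u i x" by eventually_elim simp
qed


lemma adm_nonempty: "(\<lambda>i (x::real^'d::finite). if i = 0 then 1 else 0) \<in> adm_set n"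
proof -
  have "(\<Sum>i\<le>n. (if i = 0 then 1 else 0::real)) = 1"
    by (simp add: sum.delta)
  then show ?thesis unfolding adm_set_def L2_def by auto
qed

lemma arith1: "m \<le> Fh \<Longrightarrow> Fh \<le> (a + b) / 2 - S / 2 \<Longrightarrow> a < m + e \<Longrightarrow> b < m + e' \<Longrightarrow> e' \<le> e \<Longrightarrow> S \<le> 2 * (e::real)"
  by (simp add: field_simps)

lemma exist_min:
  assumes K: "Kok K Kc" and c: "\<forall>\<xi>::nat \<Rightarrow> real. (\<Sum>i\<le>n. \<Sum>j\<le>n. \<xi> i * c i j * \<xi> j) \<ge> 0"
    and mu: "\<And>i. i \<le> n \<Longrightarrow> integrable TM (\<mu> i)"
  shows "\<exists>u::nat \<Rightarrow> real^'d::finite \<Rightarrow> real. u \<in> adm_set n \<and> (\<forall>w\<in>adm_set n. Fk n c K \<mu> u \<le> Fk n c K \<mu> w)"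
proof -
  let ?A = "adm_set n :: (nat \<Rightarrow> real^'d \<Rightarrow> real) set"
  let ?F = "Fk n c K \<mu>"
  define m where "m = Inf (?F ` ?A)"
  have ne: "?F ` ?A \<noteq> {}" using adm_nonempty by blast
  have bdd: "bdd_below (?F ` ?A)"
  proof (rule bdd_belowI[where m="- (real (Suc n) * vol TYPE('d)) - (\<Sum>i\<le>n. \<integral>x. \<bar>\<mu> i x\<bar> \<partial>TM)"])
    fix y assume "y \<in> ?F ` ?A"
    then obtain w where w: "w \<in> ?A" and y: "y = ?F w" by blast
    have "- (real (Suc n) * vol TYPE('d)) - (\<Sum>i\<le>n. \<integral>x. \<bar>\<mu> i x\<bar> \<partial>TM) \<le> ?F w"
      by (rule Fk_lower[OF K c w]) (rule mu)
    then show "- (real (Suc n) * vol TYPE('d)) - (\<Sum>i\<le>n. \<integral>x. \<bar>\<mu> i x\<bar> \<partial>TM) \<le> y" using y by simp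
  qed
  have lower: "m \<le> ?F w" if "w \<in> ?A" for w
    unfolding m_def by (rule cInf_lower[OF _ bdd]) (use that in auto)
  have "\<exists>w\<in>?A. ?F w < m + (1/4)^j" for j :: nat
  proof -
    have "Inf (?F ` ?A) < m + (1/4)^j" unfolding m_def by simp
    from cInf_lessD[OF ne this] show ?thesis by blast
  qed
  then obtain W where W: "\<And>j. W j \<in> ?A" and WF: "\<And>j. ?F (W j) < m + (1/4)^j"
    by metis
  have sq: "(\<integral>x. (W (Suc j) i x - W j i x)^2 \<partial>TM) \<le> 8 * (1/4)^j" if i: "i \<le> n" for i j
  proof -
    let ?S = "(\<Sum>i\<le>n. \<integral>x. (W j i x - W (Suc j) i x)^2 / 4 \<partial>TM)"
    have st: "?F (\<lambda>i x. (W j i x + W (Suc j) i x) / 2) \<le> (?F (W j) + ?F (W (Suc j))) / 2 - ?S / 2"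
      by (rule Fk_strong[OF K c W W]) (rule mu)
    have "m \<le> ?F (\<lambda>i x. (W j i x + W (Suc j) i x) / 2)" by (rule lower[OF adm_mid[OF W W]])
    moreover have "(1/4::real)^(Suc j) \<le> (1/4)^j" by (simp add: power_decreasing)
    ultimately have S: "?S \<le> 2 * (1/4)^j" using st WF[of j] WF[of "Suc j"] by (intro arith1)
    have "(\<integral>x. (W j i x - W (Suc j) i x)^2 / 4 \<partial>TM) \<le> ?S"
      by (rule member_le_sum) (auto intro: Bochner_Integration.integral_nonneg i)
    then have "(\<integral>x. (W j i x - W (Suc j) i x)^2 / 4 \<partial>TM) \<le> 2 * (1/4)^j" using S by linarith
    moreover have "(\<integral>x. (W j i x - W (Suc j) i x)^2 / 4 \<partial>TM) = (\<integral>x. (W (Suc j) i x - W j i x)^2 \<partial>TM) / 4"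
      by (simp add: power2_commute)
    ultimately show ?thesis by simp
  qed
  have L1: "(\<integral>x. \<bar>W (Suc j) i x - W j i x\<bar> \<partial>TM) \<le> (8 + vol TYPE('d)) / 2 * (1/2)^j" if i: "i \<le> n" for i j
  proof -
    have d: "bnd (\<lambda>x. W (Suc j) i x - W j i x)" by (intro bnd_diff adm_bnd[OF W i])
    have "(\<integral>x. \<bar>W (Suc j) i x - W j i x\<bar> \<partial>TM)
        \<le> (2^j * (\<integral>x. (W (Suc j) i x - W j i x)^2 \<partial>TM) + vol TYPE('d) / 2^j) / 2"
      by (rule L1_L2[OF d]) simp
    also have "\<dots> \<le> (2^j * (8 * (1/4)^j) + vol TYPE('d) / 2^j) / 2"
      by (intro divide_right_mono add_right_mono mult_left_mono sq i) auto
    also have "\<dots> = (8 + vol TYPE('d)) / 2 * (1/2)^j"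
    proof -
      have "(2::real)^j * (1/4)^j = (1/2)^j" by (simp add: power_mult_distrib[symmetric])
      then show ?thesis by (simp add: field_simps power_one_over)
    qed
    finally show ?thesis .
  qed
  have conv: "AE x in TM. convergent (\<lambda>j. W j i x)" if i: "i \<le> n" for i
  proof (rule AE_convergent)
    show "W j i \<in> borel_measurable TM" for j by (rule adm_meas[OF W i])
    show "integrable TM (W j i)" for j by (rule bnd_integrable[OF adm_bnd[OF W i]])
    show "summable (\<lambda>j. \<integral>x. \<bar>W (Suc j) i x - W j i x\<bar> \<partial>TM)"
    proof (rule summable_comparison_test[where g="\<lambda>j. (8 + vol TYPE('d)) / 2 * (1/2)^j"])
      show "\<exists>N. \<forall>j\<ge>N. norm (\<integral>x. \<bar>W (Suc j) i x - W j i x\<bar> \<partial>TM) \<le> (8 + vol TYPE('d)) / 2 * (1/2)^j"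
        using L1[OF i] by (auto intro!: exI[of _ 0] simp: Bochner_Integration.integral_nonneg)
      show "summable (\<lambda>j. (8 + vol TYPE('d)) / 2 * (1/2::real)^j)"
        by (intro summable_mult summable_geometric) simp
    qed
  qed
  define u where "u i x = lim (\<lambda>j. W j i x)" for i x
  have Li: "AE x in TM. \<forall>i\<le>n. (\<lambda>j. W j i x) \<longlonglongrightarrow> u i x"
  proof -
    have "AE x in TM. \<forall>i\<in>{..n}. convergent (\<lambda>j. W j i x)"
      by (rule AE_finite_allI) (use conv in auto)
    then show ?thesis by eventually_elim (auto simp: u_def convergent_LIMSEQ_iff)
  qed
  have W01: "AE x in TM. \<forall>j. \<forall>i\<le>n. 0 \<le> W j i x \<and> W j i x \<le> 1"
    by (subst AE_all_countable) (use adm_AE01[OF W] in blast)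
  have Wsum: "AE x in TM. \<forall>j. (\<Sum>i\<le>n. W j i x) = 1"
    by (subst AE_all_countable) (use W in \<open>auto simp: adm_set_def\<close>)
  have U01: "AE x in TM. \<forall>i\<le>n. 0 \<le> u i x \<and> u i x \<le> 1"
    using Li W01
  proof eventually_elim
    case (elim x)
    show ?case
    proof (intro allI impI conjI)
      fix i assume i: "i \<le> n"
      show "0 \<le> u i x" by (rule LIMSEQ_le_const[OF elim(1)[rule_format, OF i]]) (use elim(2) i in auto)
      show "u i x \<le> 1" by (rule LIMSEQ_le_const2[OF elim(1)[rule_format, OF i]]) (use elim(2) i in auto)
    qed
  qed
  have um: "u i \<in> borel_measurable TM" if i: "i \<le> n" for i
    unfolding u_def[abs_def] by (rule borel_measurable_lim_metric) (rule adm_meas[OF W i])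
  have ub: "bnd (u i)" if i: "i \<le> n" for i
    unfolding bnd_def
  proof (intro conjI exI)
    show "u i \<in> borel_measurable TM" by (rule um[OF i])
    show "AE x in TM. \<bar>u i x\<bar> \<le> 1" using U01 by eventually_elim (use i in auto)
  qed
  have uA: "u \<in> ?A"
    unfolding adm_set_def
  proof (intro CollectI conjI allI impI)
    fix i assume i: "i \<le> n"
    show "L2 TM (u i)" unfolding L2_def
      using um[OF i] bnd_integrable[OF bnd_mult[OF ub[OF i] ub[OF i]]] by (simp add: power2_eq_square)
    show "AE x in TM. 0 \<le> u i x" using U01 by eventually_elim (use i in auto)
  next
    show "AE x in TM. (\<Sum>i\<le>n. u i x) = 1"
      using Li Wsum
    proof eventually_elim
      case (elim x)
      have "(\<lambda>j. \<Sum>i\<le>n. W j i x) \<longlonglongrightarrow> (\<Sum>i\<le>n. u i x)"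
        by (intro tendsto_sum) (use elim in auto)
      then have "(\<lambda>j. 1::real) \<longlonglongrightarrow> (\<Sum>i\<le>n. u i x)" using elim(2) by simp
      then show ?case by (simp add: LIMSEQ_const_iff)
    qed
  qed
  have l1: "(\<lambda>j. ?F (W j)) \<longlonglongrightarrow> ?F u" by (rule Fk_lim[OF K W uA mu Li])
  have l2: "(\<lambda>j. ?F (W j)) \<longlonglongrightarrow> m"
  proof (rule tendsto_sandwich[where f="\<lambda>j. m" and h="\<lambda>j. m + (1/4)^j"])
    show "\<forall>\<^sub>F j in sequentially. m \<le> ?F (W j)" using lower[OF W] by simp
    show "\<forall>\<^sub>F j in sequentially. ?F (W j) \<le> m + (1/4)^j" using WF by (simp add: less_imp_le)
    show "(\<lambda>j. m) \<longlonglongrightarrow> m" by simp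
    have "(\<lambda>j. m + (1/4::real)^j) \<longlonglongrightarrow> m + 0" by (intro tendsto_add tendsto_const LIMSEQ_power_zero) simp
    then show "(\<lambda>j. m + (1/4::real)^j) \<longlonglongrightarrow> m" by simp
  qed
  have "?F u = m" using LIMSEQ_unique[OF l1 l2] .
  then show ?thesis using uA lower by auto
qed

lemma smooth_cont: assumes "smooth_real \<rho>" shows "continuous_on UNIV \<rho>"
proof -
  have "\<rho> differentiable (at x)" for x
  proof -
    have "\<forall>k x. ((deriv ^^ k) \<rho>) differentiable (at x)" using assms unfolding smooth_real_def .
    then have "(deriv ^^ 0) \<rho> differentiable (at x)" by (elim allE)
    then show ?thesis by simp
  qed
  then show ?thesis
    by (simp add: continuous_on_eq_continuous_within differentiable_imp_continuous_within)
qed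

lemma kernel_Kok:
  assumes kernel: "kernel_ok TYPE('d::finite) \<rho>" and eps: "0 < \<epsilon>"
  shows "\<exists>Kc. Kok (K_eps \<rho> \<epsilon> :: real^'d \<Rightarrow> real^'d \<Rightarrow> real) Kc"
proof -
  have cont: "continuous_on UNIV \<rho>" using kernel unfolding kernel_ok_def by (blast intro: smooth_cont)
  obtain a b where ab: "0 < a" "a \<le> b" and supp: "\<And>r. r \<notin> {a..b} \<Longrightarrow> \<rho> r = 0"
    using kernel unfolding kernel_ok_def by blast
  have nn: "\<And>r. 0 \<le> \<rho> r" using kernel unfolding kernel_ok_def by blast
  have "bounded (\<rho> ` {a..b})"
    by (intro compact_imp_bounded compact_continuous_image continuous_on_subset[OF cont]) auto
  then obtain R where R0': "\<forall>x\<in>\<rho> ` {a..b}. norm x \<le> R" unfolding bounded_iff by blast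
  then have R: "\<And>r. r \<in> {a..b} \<Longrightarrow> \<bar>\<rho> r\<bar> \<le> R" by auto
  have R0: "0 \<le> R" using R[of a] ab by auto
  define P where "P = \<epsilon> powr (- real CARD('d))"
  have P0: "0 \<le> P" unfolding P_def by simp
  define Kc where "Kc = P * R / (\<epsilon> * a)^2"
  have [measurable]: "\<rho> \<in> borel_measurable borel" by (rule borel_measurable_continuous_onI[OF cont])
  have meas: "(\<lambda>p. K_eps \<rho> \<epsilon> (fst p) (snd p)) \<in> borel_measurable (borel :: ((real^'d) \<times> (real^'d)) measure)"
  proof -
    have G: "(\<lambda>r. P * \<rho> (r / \<epsilon>) / r^2) \<in> borel_measurable borel"
      by measurable
    have T: "(\<lambda>p::(real^'d) \<times> (real^'d). tf (fst p - snd p)) \<in> borel_measurable borel"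
    proof (rule borel_measurable_continuous_onI)
      have "continuous_on UNIV (\<lambda>p::(real^'d) \<times> (real^'d). fst p - snd p)"
        by (intro continuous_on_diff continuous_on_fst continuous_on_snd continuous_on_id)
      then show "continuous_on UNIV (\<lambda>p::(real^'d) \<times> (real^'d). tf (fst p - snd p))"
        using continuous_on_compose2[OF tf_cont] by blast
    qed
    have "(\<lambda>p::(real^'d) \<times> (real^'d). (\<lambda>r. P * \<rho> (r / \<epsilon>) / r^2) (tf (fst p - snd p))) \<in> borel_measurable borel"
      by (rule measurable_compose[OF T G])
    moreover have "(\<lambda>p. K_eps \<rho> \<epsilon> (fst p) (snd p)) = (\<lambda>p::(real^'d) \<times> (real^'d). (\<lambda>r. P * \<rho> (r / \<epsilon>) / r^2) (tf (fst p - snd p)))"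
      by (rule ext) (simp only: K_eps_def rho_eps_def tdist_tf P_def)
    ultimately show ?thesis by (simp only:)
  qed
  have K0: "0 \<le> K_eps \<rho> \<epsilon> x y" for x y :: "real^'d"
    unfolding K_eps_def rho_eps_def using nn by simp
  have KC: "K_eps \<rho> \<epsilon> x y \<le> Kc" for x y :: "real^'d"
  proof (cases "\<rho> (tdist x y / \<epsilon>) = 0")
    case True
    then show ?thesis using P0 R0 unfolding K_eps_def rho_eps_def Kc_def by simp
  next
    case False
    then have inab: "tdist x y / \<epsilon> \<in> {a..b}" using supp by blast
    then have "\<epsilon> * a \<le> tdist x y" using eps by (simp add: field_simps)
    moreover have "0 < \<epsilon> * a" using eps ab by simp
    ultimately have sq: "(\<epsilon> * a)^2 \<le> (tdist x y)^2" by (intro power_mono) auto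
    have PR: "P * \<rho> (tdist x y / \<epsilon>) \<le> P * R" using R[OF inab] P0 by (intro mult_left_mono) auto
    have "P * \<rho> (tdist x y / \<epsilon>) / (tdist x y)^2 \<le> P * R / (\<epsilon> * a)^2"
      by (rule frac_le[OF _ PR]) (use P0 R0 sq \<open>0 < \<epsilon> * a\<close> in auto)
    then show ?thesis unfolding K_eps_def rho_eps_def Kc_def P_def .
  qed
  have sym: "K_eps \<rho> \<epsilon> x y = K_eps \<rho> \<epsilon> y x" for x y :: "real^'d"
    unfolding K_eps_def using tdist_sym[of x y] by simp
  have "Kok (K_eps \<rho> \<epsilon> :: real^'d \<Rightarrow> real^'d \<Rightarrow> real) Kc"
    unfolding Kok_def by (intro conjI allI meas K0 KC sym)
  then show ?thesis ..
qed

lemma H2_integrable: assumes "H2_torus (f :: real^'d::finite \<Rightarrow> real)" shows "integrable TM f"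
proof -
  have m: "f \<in> borel_measurable TM" and i: "integrable TM (\<lambda>x. (f x)^2)"
    using assms unfolding H2_torus_def L2_def by auto
  show ?thesis
  proof (rule Bochner_Integration.integrable_bound[where f="\<lambda>x. 1 + (f x)^2"])
    show "integrable TM (\<lambda>x. 1 + (f x)^2)" using i by simp
    show "f \<in> borel_measurable TM" by (rule m)
    show "AE x in TM. norm (f x) \<le> norm (1 + (f x)^2)"
    proof (rule AE_I2)
      fix x
      have "\<bar>f x\<bar> \<le> 1 + (f x)^2"
      proof (cases "\<bar>f x\<bar> \<le> 1")
        case False
        then have "\<bar>f x\<bar> * 1 \<le> \<bar>f x\<bar> * \<bar>f x\<bar>" by (intro mult_left_mono) auto
        then show ?thesis by (simp add: power2_eq_square)
      next
        case True
        have "0 \<le> (f x)^2" by simp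
        then show ?thesis using True by linarith
      qed
      then show "norm (f x) \<le> norm (1 + (f x)^2)" by simp
    qed
  qed
qed

theorem lemma3p4:
  fixes n :: nat and \<rho> :: "real \<Rightarrow> real"
  assumes dim: "CARD('d::finite) = 2 \<or> CARD('d) = 3"
    and n: "n \<ge> 1"
    and kernel: "kernel_ok TYPE('d) \<rho>"
  shows "\<exists>\<delta>>0. \<forall>(c :: nat \<Rightarrow> nat \<Rightarrow> real) (\<epsilon>::real) (\<mu> :: nat \<Rightarrow> real^'d \<Rightarrow> real).
           coeff_ok n c \<and> (real n - 1) * offdiag_sup n c < \<delta> * diag_min n c
           \<and> \<epsilon> > 0 \<and> (\<forall>i\<le>n. H2_torus (\<mu> i)) \<longrightarrow>
           (\<exists>u \<in> adm_set n.
              (\<forall>w \<in> adm_set n. F_mu n c \<rho> \<epsilon> \<mu> u \<le> F_mu n c \<rho> \<epsilon> \<mu> w) \<and>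
              (\<forall>v \<in> adm_set n. (\<forall>w \<in> adm_set n. F_mu n c \<rho> \<epsilon> \<mu> v \<le> F_mu n c \<rho> \<epsilon> \<mu> w)
                 \<longrightarrow> (\<forall>i\<le>n. AE x in torus_meas TYPE('d). v i x = u i x)))"
proof -
  have main: "\<exists>u \<in> adm_set n.
              (\<forall>w \<in> adm_set n. F_mu n c \<rho> \<epsilon> \<mu> u \<le> F_mu n c \<rho> \<epsilon> \<mu> w) \<and>
              (\<forall>v \<in> adm_set n. (\<forall>w \<in> adm_set n. F_mu n c \<rho> \<epsilon> \<mu> v \<le> F_mu n c \<rho> \<epsilon> \<mu> w)
                 \<longrightarrow> (\<forall>i\<le>n. AE x in torus_meas TYPE('d). v i x = u i x))"
    if c: "coeff_ok n c" and eps: "\<epsilon> > 0" and mu: "\<forall>i\<le>n. H2_torus (\<mu> i)"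
    for c :: "nat \<Rightarrow> nat \<Rightarrow> real" and \<epsilon> :: real and \<mu> :: "nat \<Rightarrow> real^'d \<Rightarrow> real"
  proof -
    obtain Kc where K: "Kok (K_eps \<rho> \<epsilon> :: real^'d \<Rightarrow> real^'d \<Rightarrow> real) Kc"
      using kernel_Kok[OF kernel eps] by blast
    have psd: "\<forall>\<xi>::nat \<Rightarrow> real. (\<Sum>i\<le>n. \<Sum>j\<le>n. \<xi> i * c i j * \<xi> j) \<ge> 0"
      using c unfolding coeff_ok_def by blast
    have mui: "\<And>i. i \<le> n \<Longrightarrow> integrable TM (\<mu> i)" using mu H2_integrable by blast
    have "\<exists>u::nat \<Rightarrow> real^'d \<Rightarrow> real. u \<in> adm_set n \<and> (\<forall>w\<in>adm_set n. Fk n c (K_eps \<rho> \<epsilon>) \<mu> u \<le> Fk n c (K_eps \<rho> \<epsilon>) \<mu> w)"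
      by (rule exist_min[OF K psd]) (rule mui)
    then obtain u where u: "u \<in> adm_set n" and um: "\<forall>w\<in>adm_set n. Fk n c (K_eps \<rho> \<epsilon>) \<mu> u \<le> Fk n c (K_eps \<rho> \<epsilon>) \<mu> w"
      by blast
    have "\<forall>v \<in> adm_set n. (\<forall>w \<in> adm_set n. Fk n c (K_eps \<rho> \<epsilon>) \<mu> v \<le> Fk n c (K_eps \<rho> \<epsilon>) \<mu> w)
                 \<longrightarrow> (\<forall>i\<le>n. AE x in TM. v i x = u i x)"
    proof (intro ballI impI)
      fix v assume v: "v \<in> adm_set n" and vm: "\<forall>w\<in>adm_set n. Fk n c (K_eps \<rho> \<epsilon>) \<mu> v \<le> Fk n c (K_eps \<rho> \<epsilon>) \<mu> w"
      show "\<forall>i\<le>n. AE x in TM. v i x = u i x"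
        by (rule unique_min[OF K psd _ u v um vm]) (rule mui)
    qed
    then show ?thesis using u um unfolding F_mu_Fk by (intro bexI[of _ u] conjI) auto
  qed
  show ?thesis
  proof (rule exI[of _ "1::real"], intro conjI allI impI)
    fix c :: "nat \<Rightarrow> nat \<Rightarrow> real" and \<epsilon> :: real and \<mu> :: "nat \<Rightarrow> real^'d \<Rightarrow> real"
    assume h: "coeff_ok n c \<and> (real n - 1) * offdiag_sup n c < 1 * diag_min n c \<and> \<epsilon> > 0 \<and> (\<forall>i\<le>n. H2_torus (\<mu> i))"
    show "\<exists>u \<in> adm_set n.
              (\<forall>w \<in> adm_set n. F_mu n c \<rho> \<epsilon> \<mu> u \<le> F_mu n c \<rho> \<epsilon> \<mu> w) \<and>
              (\<forall>v \<in> adm_set n. (\<forall>w \<in> adm_set n. F_mu n c \<rho> \<epsilon> \<mu> v \<le> F_mu n c \<rho> \<epsilon> \<mu> w)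
                 \<longrightarrow> (\<forall>i\<le>n. AE x in torus_meas TYPE('d). v i x = u i x))"
      by (rule main) (use h in auto)
  qed simp
qed

end
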